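(* Let $(\Omega,\mathcal{F},\mathbb{P})$ be a complete probability space, $t_0<T$, $x_0$ a random variable and $a$ a stochastic process on $[t_0,T]$, and let $x(t,\omega)=x_0(\omega)\mathrm{e}^{\int_{t_0}^t a(s,\omega)\mathrm{d} s}$. Assume: (H1) $a\in \mathrm{L}^2([t_0,T]\times\Omega)$; (H2) for every $N\ge2$, $x_0$, $\xi_1$ and $(\xi_2,\ldots,\xi_N)$ are absolutely continuous and independent; (H3) the density $f_{\xi_1}$ of $\xi_1$ is continuous and bounded on $\mathbb{R}$; (H4) $\int_{t_0}^t\phi_1(s)\,\mathrm{d} s\ne0$ for all $t\in(t_0,T]$; (H5) either $x_0>0$ a.s. or $x_0<0$ a.s. Then for each fixed $t\in(t_0,T]$ and $x\ne0$, the sequence \[ f_1^N(x,t)=\int_{\mathbb{R}^N} f_0\big(x\,\mathrm{e}^{-K_a(t,\pmb{\xi}_N)}\big)f_{\pmb{\xi}_N}(\pmb{\xi}_N)\,\mathrm{e}^{-K_a(t,\pmb{\xi}_N)}\,\mathrm{d}\pmb{\xi}_N \] (where $f_0$ is the density of $x_0$) converges to $f_1(x,t)$, where $f_1(\cdot,t)$ is a probability density of $x(t,\cdot)$.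
   Context: Karhunen–Loève expansion: for $a\in \mathrm{L}^2([t_0,T]\times\Omega)$ write $a(t,\omega)=\mu_a(t)+\sum_{j=1}^\infty\sqrt{\nu_j}\,\phi_j(t)\xi_j(\omega)$ (convergence in $\mathrm{L}^2([t_0,T]\times\Omega)$), where $\mu_a(t)=\mathbb{E}[a(t)]$, $\{(\nu_j,\phi_j)\}$ are the (nonnegative) eigenvalue/eigenfunction pairs of the covariance operator $\mathcal{C}f(t)=\int_{t_0}^T\mathrm{Cov}[a(t),a(s)]f(s)\,\mathrm{d} s$ on $\mathrm{L}^2([t_0,T])$ with $\{\phi_j\}$ an orthonormal basis, and $\xi_j$ are zero-mean, unit-variance, pairwise uncorrelated random variables; pairs may be enumerated in any order (here $\nu_1>0$). $\pmb{\xi}_N=(\xi_1,\ldots,\xi_N)$, $f_{\pmb{\xi}_N}$ its density, $K_a(t,\pmb{\xi}_N)=\int_{t_0}^t\big(\mu_a(s)+\sum_{j=1}^N\sqrt{\nu_j}\phi_j(s)\xi_j\big)\mathrm{d} s$. *)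

theory Defs
  imports "HOL-Probability.Probability"
begin

definition mean_proc :: "'a measure \<Rightarrow> (real \<Rightarrow> 'a \<Rightarrow> real) \<Rightarrow> real \<Rightarrow> real" where
  "mean_proc M a t = integral\<^sup>L M (a t)"

definition cov_proc :: "'a measure \<Rightarrow> (real \<Rightarrow> 'a \<Rightarrow> real) \<Rightarrow> real \<Rightarrow> real \<Rightarrow> real" where
  "cov_proc M a t s =
     integral\<^sup>L M (\<lambda>\<omega>. (a t \<omega> - mean_proc M a t) * (a s \<omega> - mean_proc M a s))"

definition L2_process :: "'a measure \<Rightarrow> real \<Rightarrow> real \<Rightarrow> (real \<Rightarrow> 'a \<Rightarrow> real) \<Rightarrow> bool" where
  "L2_process M t0 T a \<longleftrightarrow>
     (\<lambda>(t,\<omega>). a t \<omega>) \<in> borel_measurable (restrict_space lborel {t0..T} \<Otimes>\<^sub>M M) \<and>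
     integrable (restrict_space lborel {t0..T} \<Otimes>\<^sub>M M) (\<lambda>(t,\<omega>). (a t \<omega>)\<^sup>2)"

definition KL_expansion ::
  "'a measure \<Rightarrow> real \<Rightarrow> real \<Rightarrow> (real \<Rightarrow> 'a \<Rightarrow> real) \<Rightarrow> (nat \<Rightarrow> real)
    \<Rightarrow> (nat \<Rightarrow> real \<Rightarrow> real) \<Rightarrow> (nat \<Rightarrow> 'a \<Rightarrow> real) \<Rightarrow> bool" where
  "KL_expansion M t0 T a \<nu> \<phi> \<xi> \<longleftrightarrow>
     \<comment> \<open>eigenpairs with nonnegative eigenvalues\<close>
     (\<forall>j\<ge>1. 0 \<le> \<nu> j \<and>
        (AE t in lborel. t \<in> {t0..T} \<longrightarrow>
           (LINT s:{t0..T}|lborel. cov_proc M a t s * \<phi> j s) = \<nu> j * \<phi> j t)) \<and>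
     \<comment> \<open>orthonormal\<close>
     (\<forall>j\<ge>1. \<phi> j \<in> borel_measurable lborel \<and> set_integrable lborel {t0..T} (\<lambda>s. (\<phi> j s)\<^sup>2)) \<and>
     (\<forall>i\<ge>1. \<forall>j\<ge>1. (LINT s:{t0..T}|lborel. \<phi> i s * \<phi> j s) = (if i = j then 1 else 0)) \<and>
     \<comment> \<open>complete (basis of L^2([t0,T]))\<close>
     (\<forall>f. f \<in> borel_measurable lborel \<and> set_integrable lborel {t0..T} (\<lambda>s. (f s)\<^sup>2) \<and>
          (\<forall>j\<ge>1. (LINT s:{t0..T}|lborel. f s * \<phi> j s) = 0)
          \<longrightarrow> (AE s in lborel. s \<in> {t0..T} \<longrightarrow> f s = 0)) \<and>
     \<comment> \<open>the random coefficients\<close>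
     (\<forall>j\<ge>1. \<xi> j \<in> borel_measurable M \<and> integrable M (\<lambda>\<omega>. (\<xi> j \<omega>)\<^sup>2) \<and>
        integral\<^sup>L M (\<xi> j) = 0 \<and> integral\<^sup>L M (\<lambda>\<omega>. (\<xi> j \<omega>)\<^sup>2) = 1) \<and>
     (\<forall>i\<ge>1. \<forall>j\<ge>1. i \<noteq> j \<longrightarrow> integral\<^sup>L M (\<lambda>\<omega>. \<xi> i \<omega> * \<xi> j \<omega>) = 0) \<and>
     \<comment> \<open>convergence in L^2([t0,T] x Omega)\<close>
     ((\<lambda>N. integral\<^sup>L (restrict_space lborel {t0..T} \<Otimes>\<^sub>M M)
          (\<lambda>(t,\<omega>). (a t \<omega> - mean_proc M a t
                      - (\<Sum>j\<in>{1..N}. sqrt (\<nu> j) * \<phi> j t * \<xi> j \<omega>))\<^sup>2)) \<longlonglongrightarrow> 0)"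

definition xi_vec :: "(nat \<Rightarrow> 'a \<Rightarrow> real) \<Rightarrow> nat \<Rightarrow> 'a \<Rightarrow> nat \<Rightarrow> real" where
  "xi_vec \<xi> N \<omega> = restrict (\<lambda>j. \<xi> j \<omega>) {1..N}"

definition K_a :: "'a measure \<Rightarrow> (real \<Rightarrow> 'a \<Rightarrow> real) \<Rightarrow> (nat \<Rightarrow> real) \<Rightarrow> (nat \<Rightarrow> real \<Rightarrow> real)
                   \<Rightarrow> real \<Rightarrow> nat \<Rightarrow> real \<Rightarrow> (nat \<Rightarrow> real) \<Rightarrow> real" where
  "K_a M a \<nu> \<phi> t0 N t y =
     (LINT s:{t0..t}|lborel. mean_proc M a s + (\<Sum>j\<in>{1..N}. sqrt (\<nu> j) * \<phi> j s * y j))"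

definition (in prob_space) indep3 ::
  "'b measure \<Rightarrow> ('a \<Rightarrow> 'b) \<Rightarrow> 'c measure \<Rightarrow> ('a \<Rightarrow> 'c) \<Rightarrow> 'd measure \<Rightarrow> ('a \<Rightarrow> 'd) \<Rightarrow> bool" where
  "indep3 M1 X M2 Y M3 Z \<longleftrightarrow>
     X \<in> measurable M M1 \<and> Y \<in> measurable M M2 \<and> Z \<in> measurable M M3 \<and>
     (\<forall>A\<in>sets M1. \<forall>B\<in>sets M2. \<forall>C\<in>sets M3.
        prob (X -` A \<inter> Y -` B \<inter> Z -` C \<inter> space M) =
        prob (X -` A \<inter> space M) * prob (Y -` B \<inter> space M) * prob (Z -` C \<inter> space M))"

definition f1N :: "'a measure \<Rightarrow> (real \<Rightarrow> 'a \<Rightarrow> real) \<Rightarrow> (nat \<Rightarrow> real) \<Rightarrow> (nat \<Rightarrow> real \<Rightarrow> real)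
                  \<Rightarrow> real \<Rightarrow> (real \<Rightarrow> real) \<Rightarrow> (nat \<Rightarrow> (nat \<Rightarrow> real) \<Rightarrow> real)
                  \<Rightarrow> nat \<Rightarrow> real \<Rightarrow> real \<Rightarrow> real" where
  "f1N M a \<nu> \<phi> t0 f0 fxi N x t =
     integral\<^sup>L (PiM {1..N} (\<lambda>_. lborel))
       (\<lambda>y. f0 (x * exp (- K_a M a \<nu> \<phi> t0 N t y)) * fxi N y * exp (- K_a M a \<nu> \<phi> t0 N t y))"

end

theory Submission
  imports Defs "HOL-Library.Infinite_Set"
begin

lemma exp_subst_nn:
  fixes H :: "real \<Rightarrow> ennreal"
  assumes [measurable]: "H \<in> borel_measurable borel"
  shows "(\<integral>\<^sup>+k. H (exp k) \<partial>lborel) = (\<integral>\<^sup>+w. H w * ennreal (1 / w) \<partial>lborel)"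
proof -
  let ?f = "\<lambda>w. H w * ennreal (1 / w)"
  have eq: "(\<integral>\<^sup>+w. ?f w * indicator {exp (- real (Suc n))..exp (real (Suc n))} w \<partial>lborel) =
            (\<integral>\<^sup>+k. H (exp k) * indicator {- real (Suc n)..real (Suc n)} k \<partial>lborel)" for n
  proof -
    have "(\<integral>\<^sup>+w. ?f w * indicator {exp (- real (Suc n))..exp (real (Suc n))} w \<partial>lborel) =
          (\<integral>\<^sup>+k. ?f (exp k) * exp k * indicator {- real (Suc n)..real (Suc n)} k \<partial>lborel)"
      by (rule nn_integral_substitution_aux) (auto intro!: derivative_eq_intros continuous_intros)
    also have "\<dots> = (\<integral>\<^sup>+k. H (exp k) * indicator {- real (Suc n)..real (Suc n)} k \<partial>lborel)"
    proof (rule nn_integral_cong)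
      fix k :: real
      have "ennreal (1 / exp k) * ennreal (exp k) = 1"
        by (simp add: ennreal_mult'[symmetric])
      then show "?f (exp k) * ennreal (exp k) * indicator {- real (Suc n)..real (Suc n)} k =
                 H (exp k) * indicator {- real (Suc n)..real (Suc n)} k"
        by (simp add: mult.assoc)
    qed
    finally show ?thesis .
  qed
  have L1: "(\<lambda>n. \<integral>\<^sup>+w. ?f w * indicator {exp (- real (Suc n))..exp (real (Suc n))} w \<partial>lborel)
            \<longlonglongrightarrow> (\<integral>\<^sup>+w. ?f w \<partial>lborel)"
  proof (rule nn_integral_LIMSEQ)
    show "incseq (\<lambda>n w. ?f w * indicator {exp (- real (Suc n))..exp (real (Suc n))} w)"
      unfolding incseq_def le_fun_def
    proof (intro allI impI)
      fix m n :: nat and x :: real assume "m \<le> n"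
      then have sub: "{exp (- real (Suc m))..exp (real (Suc m))} \<subseteq> {exp (- real (Suc n))..exp (real (Suc n))}"
        by (intro atLeastatMost_subset_iff[THEN iffD2] disjI2) auto
      have "x \<in> {exp (- real (Suc m))..exp (real (Suc m))} \<Longrightarrow> x \<in> {exp (- real (Suc n))..exp (real (Suc n))}"
        using sub by blast
      then have "indicator {exp (- real (Suc m))..exp (real (Suc m))} x
          \<le> (indicator {exp (- real (Suc n))..exp (real (Suc n))} x :: ennreal)"
        unfolding indicator_def by (simp del: atLeastAtMost_iff)
      then show "?f x * indicator {exp (- real (Suc m))..exp (real (Suc m))} x
          \<le> ?f x * indicator {exp (- real (Suc n))..exp (real (Suc n))} x"
        by (rule mult_left_mono) (rule zero_le)
    qed
    show "(\<lambda>n. ?f w * indicator {exp (- real (Suc n))..exp (real (Suc n))} w) \<longlonglongrightarrow> ?f w" for w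
    proof (cases "w > 0")
      case True
      obtain n :: nat where n: "\<bar>ln w\<bar> < real n" using reals_Archimedean2 by blast
      have "eventually (\<lambda>m. ?f w * indicator {exp (- real (Suc m))..exp (real (Suc m))} w = ?f w) sequentially"
        using eventually_ge_at_top[of n]
      proof eventually_elim
        case (elim m)
        have "exp (- real (Suc m)) \<le> exp (ln w)" "exp (ln w) \<le> exp (real (Suc m))"
          using n elim by auto
        then show ?case using True by (auto split: split_indicator)
      qed
      then show ?thesis by (rule tendsto_eventually)
    next
      case False
      then show ?thesis by (simp add: ennreal_neg)
    qed
  qed auto
  have L2: "(\<lambda>n. \<integral>\<^sup>+k. H (exp k) * indicator {- real (Suc n)..real (Suc n)} k \<partial>lborel)
            \<longlonglongrightarrow> (\<integral>\<^sup>+k. H (exp k) \<partial>lborel)"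
  proof (rule nn_integral_LIMSEQ)
    show "incseq (\<lambda>n k. H (exp k) * indicator {- real (Suc n)..real (Suc n)} k)"
      by (auto simp: incseq_def le_fun_def intro!: mult_left_mono split: split_indicator)
    show "(\<lambda>n. H (exp k) * indicator {- real (Suc n)..real (Suc n)} k) \<longlonglongrightarrow> H (exp k)" for k
    proof -
      obtain n :: nat where n: "\<bar>k\<bar> < real n" using reals_Archimedean2 by blast
      have "eventually (\<lambda>m. H (exp k) * indicator {- real (Suc m)..real (Suc m)} k = H (exp k)) sequentially"
        using eventually_ge_at_top[of n] by eventually_elim (use n in \<open>auto split: split_indicator\<close>)
      then show ?thesis by (rule tendsto_eventually)
    qed
  qed auto
  show ?thesis using LIMSEQ_unique[OF L2 L1[unfolded eq]] .
qed

lemma subst_main: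
  fixes h :: "real \<Rightarrow> ennreal" and fu :: "real \<Rightarrow> real"
  assumes [measurable]: "h \<in> borel_measurable borel" "fu \<in> borel_measurable borel"
    and fu0: "\<And>u. 0 \<le> fu u" and p: "p \<noteq> 0" and c: "c \<noteq> 0"
  shows "(\<integral>\<^sup>+u. h (p * exp (c * u + v)) * ennreal (fu u) \<partial>lborel) =
         (\<integral>\<^sup>+w. h w * ennreal (if 0 < w / p then fu ((ln (w / p) - v) / c) / (\<bar>c\<bar> * \<bar>w\<bar>) else 0) \<partial>lborel)"
proof -
  define G where "G k = h (p * exp k) * ennreal (fu ((k - v) / c))" for k
  define Hh where "Hh y = h (p * y) * ennreal (fu ((ln y - v) / c))" for y
  define F where "F w = h w * ennreal (fu ((ln (w / p) - v) / c)) * ennreal (1 / (w / p))" for w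
  have [measurable]: "G \<in> borel_measurable borel" "Hh \<in> borel_measurable borel" "F \<in> borel_measurable borel"
    unfolding G_def Hh_def F_def by measurable
  have s1: "(\<integral>\<^sup>+k. G k \<partial>lborel) = ennreal \<bar>c\<bar> * (\<integral>\<^sup>+u. h (p * exp (c * u + v)) * ennreal (fu u) \<partial>lborel)"
    using nn_integral_real_affine[of G c v] c unfolding G_def
    by (simp add: add.commute)
  have s2: "(\<integral>\<^sup>+k. G k \<partial>lborel) = (\<integral>\<^sup>+y. Hh y * ennreal (1 / y) \<partial>lborel)"
  proof -
    have "(\<integral>\<^sup>+k. G k \<partial>lborel) = (\<integral>\<^sup>+k. Hh (exp k) \<partial>lborel)"
      unfolding G_def Hh_def by simp
    also have "\<dots> = (\<integral>\<^sup>+y. Hh y * ennreal (1 / y) \<partial>lborel)"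
      by (rule exp_subst_nn) simp
    finally show ?thesis .
  qed
  have s3: "(\<integral>\<^sup>+w. F w \<partial>lborel) = ennreal \<bar>p\<bar> * (\<integral>\<^sup>+y. Hh y * ennreal (1 / y) \<partial>lborel)"
    using nn_integral_real_affine[of F p 0] p unfolding F_def Hh_def
    by simp
  have "(\<integral>\<^sup>+u. h (p * exp (c * u + v)) * ennreal (fu u) \<partial>lborel)
        = ennreal (1 / \<bar>c\<bar>) * (ennreal (1 / \<bar>p\<bar>) * (\<integral>\<^sup>+w. F w \<partial>lborel))"
  proof -
    have e1: "ennreal (1 / \<bar>c\<bar>) * ennreal \<bar>c\<bar> = 1" using c by (simp add: ennreal_mult'[symmetric])
    have e2: "ennreal (1 / \<bar>p\<bar>) * ennreal \<bar>p\<bar> = 1" using p by (simp add: ennreal_mult'[symmetric])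
    have "(\<integral>\<^sup>+u. h (p * exp (c * u + v)) * ennreal (fu u) \<partial>lborel)
        = ennreal (1 / \<bar>c\<bar>) * (\<integral>\<^sup>+k. G k \<partial>lborel)"
      unfolding s1 by (simp add: mult.assoc[symmetric] e1)
    also have "\<dots> = ennreal (1 / \<bar>c\<bar>) * (ennreal (1 / \<bar>p\<bar>) * (\<integral>\<^sup>+w. F w \<partial>lborel))"
      unfolding s2 s3 by (simp add: mult.assoc[symmetric] e2)
    finally show ?thesis .
  qed
  also have "\<dots> = (\<integral>\<^sup>+w. ennreal (1 / \<bar>c\<bar>) * (ennreal (1 / \<bar>p\<bar>) * F w) \<partial>lborel)"
    by (simp add: nn_integral_cmult)
  also have "\<dots> = (\<integral>\<^sup>+w. h w * ennreal (if 0 < w / p then fu ((ln (w / p) - v) / c) / (\<bar>c\<bar> * \<bar>w\<bar>) else 0) \<partial>lborel)"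
  proof (rule nn_integral_cong)
    fix w :: real
    show "ennreal (1 / \<bar>c\<bar>) * (ennreal (1 / \<bar>p\<bar>) * F w) =
          h w * ennreal (if 0 < w / p then fu ((ln (w / p) - v) / c) / (\<bar>c\<bar> * \<bar>w\<bar>) else 0)"
    proof (cases "0 < w / p")
      case True
      then have w: "w \<noteq> 0" by auto
      have k: "1 / \<bar>c\<bar> * (1 / \<bar>p\<bar>) * (1 / (w / p)) = 1 / (\<bar>c\<bar> * \<bar>w\<bar>)"
        using True p c w by (auto simp: field_simps abs_if zero_less_divide_iff split: if_splits)
      have "ennreal (1 / \<bar>c\<bar>) * (ennreal (1 / \<bar>p\<bar>) * F w)
          = h w * (ennreal (fu ((ln (w / p) - v) / c)) * (ennreal (1 / \<bar>c\<bar>) * ennreal (1 / \<bar>p\<bar>) * ennreal (1 / (w / p))))"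
        unfolding F_def by (simp add: ac_simps)
      also have "ennreal (1 / \<bar>c\<bar>) * ennreal (1 / \<bar>p\<bar>) * ennreal (1 / (w / p)) = ennreal (1 / (\<bar>c\<bar> * \<bar>w\<bar>))"
      proof -
        have "ennreal (1 / \<bar>c\<bar> * (1 / \<bar>p\<bar>) * (1 / (w / p))) = ennreal (1 / \<bar>c\<bar> * (1 / \<bar>p\<bar>)) * ennreal (1 / (w / p))"
          by (rule ennreal_mult') simp
        moreover have "ennreal (1 / \<bar>c\<bar> * (1 / \<bar>p\<bar>)) = ennreal (1 / \<bar>c\<bar>) * ennreal (1 / \<bar>p\<bar>)"
          by (rule ennreal_mult') simp
        ultimately show ?thesis using k by simp
      qed
      also have "ennreal (fu ((ln (w / p) - v) / c)) * ennreal (1 / (\<bar>c\<bar> * \<bar>w\<bar>))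
          = ennreal (fu ((ln (w / p) - v) / c) / (\<bar>c\<bar> * \<bar>w\<bar>))"
        using fu0 by (simp add: ennreal_mult'[symmetric])
      finally show ?thesis using True by simp
    next
      case False
      then have "1 / (w / p) \<le> 0" by (simp add: not_less divide_le_0_iff) linarith
      then show ?thesis using False unfolding F_def by (simp add: ennreal_neg)
    qed
  qed
  finally show ?thesis .
qed

lemma subsubseq_LIMSEQ:
  fixes a :: "nat \<Rightarrow> real"
  assumes H: "\<And>r::nat\<Rightarrow>nat. strict_mono r \<Longrightarrow> \<exists>s::nat\<Rightarrow>nat. strict_mono s \<and> (\<lambda>n. a (r (s n))) \<longlonglongrightarrow> L"
  shows "a \<longlonglongrightarrow> L"
proof (rule ccontr)
  assume "\<not> a \<longlonglongrightarrow> L"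
  then obtain e where e: "e > 0" and nev: "\<not> eventually (\<lambda>n. dist (a n) L < e) sequentially"
    unfolding tendsto_iff by blast
  then have "frequently (\<lambda>n. \<not> dist (a n) L < e) sequentially"
    by (simp add: not_eventually)
  then have "infinite {n. \<not> dist (a n) L < e}"
    unfolding cofinite_eq_sequentially[symmetric] frequently_cofinite .
  then obtain r :: "nat \<Rightarrow> nat" where r: "strict_mono r" "\<And>n. r n \<in> {n. \<not> dist (a n) L < e}"
    using infinite_enumerate by blast
  obtain s where s: "strict_mono s" "(\<lambda>n. a (r (s n))) \<longlonglongrightarrow> L" using H[OF r(1)] by blast
  then have "eventually (\<lambda>n. dist (a (r (s n))) L < e) sequentially"
    using e unfolding tendsto_iff by blast
  then obtain n where "dist (a (r (s n))) L < e" by (auto simp: eventually_sequentially)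
  with r(2)[of "s n"] show False by simp
qed

lemma conv_bounded_L1:
  fixes Z :: "'a \<Rightarrow> 'b" and V :: "nat \<Rightarrow> 'a \<Rightarrow> real" and Vl :: "'a \<Rightarrow> real"
    and H :: "'b \<Rightarrow> real \<Rightarrow> real"
  assumes P: "prob_space M"
    and [measurable]: "Z \<in> measurable M N" "\<And>n. V n \<in> borel_measurable M" "Vl \<in> borel_measurable M"
    and int: "\<And>n. integrable M (\<lambda>\<omega>. V n \<omega> - Vl \<omega>)"
    and lim: "(\<lambda>n. \<integral>\<omega>. \<bar>V n \<omega> - Vl \<omega>\<bar> \<partial>M) \<longlonglongrightarrow> 0"
    and Hm[measurable]: "(\<lambda>(z, v). H z v) \<in> borel_measurable (N \<Otimes>\<^sub>M borel)"
    and Hc: "\<And>z. continuous_on UNIV (H z)"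
    and Hb: "\<And>z v. \<bar>H z v\<bar> \<le> B"
  shows "(\<lambda>n. \<integral>\<omega>. H (Z \<omega>) (V n \<omega>) \<partial>M) \<longlonglongrightarrow> (\<integral>\<omega>. H (Z \<omega>) (Vl \<omega>) \<partial>M)"
proof (rule subsubseq_LIMSEQ)
  interpret prob_space M by fact
  fix r :: "nat \<Rightarrow> nat" assume r: "strict_mono r"
  have l2: "(\<lambda>n. \<integral>\<omega>. norm (V (r n) \<omega> - Vl \<omega>) \<partial>M) \<longlonglongrightarrow> 0"
    using LIMSEQ_subseq_LIMSEQ[OF lim r] by (simp add: comp_def)
  obtain s where s: "strict_mono s" and ae: "AE \<omega> in M. (\<lambda>n. V (r (s n)) \<omega> - Vl \<omega>) \<longlonglongrightarrow> 0"
    using tendsto_L1_AE_subseq[OF int l2] by auto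
  have "(\<lambda>n. \<integral>\<omega>. H (Z \<omega>) (V (r (s n)) \<omega>) \<partial>M) \<longlonglongrightarrow> (\<integral>\<omega>. H (Z \<omega>) (Vl \<omega>) \<partial>M)"
  proof (rule integral_dominated_convergence[where w="\<lambda>_. B"])
    have mH: "(\<lambda>\<omega>. H (Z \<omega>) (f \<omega>)) \<in> borel_measurable M" if [measurable]: "f \<in> borel_measurable M" for f
    proof -
      have "(\<lambda>\<omega>. (Z \<omega>, f \<omega>)) \<in> measurable M (N \<Otimes>\<^sub>M borel)" by measurable
      from measurable_compose[OF this Hm] show ?thesis by simp
    qed
    show "(\<lambda>\<omega>. H (Z \<omega>) (Vl \<omega>)) \<in> borel_measurable M" by (rule mH) simp
    show "(\<lambda>\<omega>. H (Z \<omega>) (V (r (s i)) \<omega>)) \<in> borel_measurable M" for i by (rule mH) simp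
    show "integrable M (\<lambda>_. B)" by simp
    show "AE \<omega> in M. norm (H (Z \<omega>) (V (r (s i)) \<omega>)) \<le> B" for i using Hb by simp
    show "AE \<omega> in M. (\<lambda>n. H (Z \<omega>) (V (r (s n)) \<omega>)) \<longlonglongrightarrow> H (Z \<omega>) (Vl \<omega>)"
      using ae
    proof eventually_elim
      case (elim \<omega>)
      have "(\<lambda>n. (V (r (s n)) \<omega> - Vl \<omega>) + Vl \<omega>) \<longlonglongrightarrow> 0 + Vl \<omega>"
        by (intro tendsto_add elim tendsto_const)
      then have "(\<lambda>n. V (r (s n)) \<omega>) \<longlonglongrightarrow> Vl \<omega>" by simp
      moreover have "isCont (H (Z \<omega>)) (Vl \<omega>)"
        using Hc[of "Z \<omega>"] by (simp add: continuous_on_eq_continuous_at)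
      ultimately show ?case by (rule isCont_tendsto_compose[rotated])
    qed
  qed
  then show "\<exists>s. strict_mono s \<and> (\<lambda>n. \<integral>\<omega>. H (Z \<omega>) (V (r (s n)) \<omega>) \<partial>M) \<longlonglongrightarrow> (\<integral>\<omega>. H (Z \<omega>) (Vl \<omega>) \<partial>M)"
    using s by blast
qed

context prob_space
begin

lemma indep3_prob:
  assumes "indep3 M1 X M2 Y M3 Z" "A \<in> sets M1" "B \<in> sets M2" "C \<in> sets M3"
  shows "emeasure M (X -` A \<inter> Y -` B \<inter> Z -` C \<inter> space M) =
         emeasure (distr M M1 X) A * emeasure (distr M M2 Y) B * emeasure (distr M M3 Z) C"
proof -
  have m: "X \<in> measurable M M1" "Y \<in> measurable M M2" "Z \<in> measurable M M3"
    using assms(1) unfolding indep3_def by auto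
  have "prob (X -` A \<inter> Y -` B \<inter> Z -` C \<inter> space M) =
        prob (X -` A \<inter> space M) * prob (Y -` B \<inter> space M) * prob (Z -` C \<inter> space M)"
    using assms unfolding indep3_def by blast
  then show ?thesis
    using assms m by (simp add: emeasure_distr emeasure_eq_measure ennreal_mult'[symmetric] measure_nonneg)
qed

lemma indep3_pair23:
  assumes I: "indep3 M1 X M2 Y M3 Z"
  shows "distr M (M2 \<Otimes>\<^sub>M M3) (\<lambda>\<omega>. (Y \<omega>, Z \<omega>)) = distr M M2 Y \<Otimes>\<^sub>M distr M M3 Z"
proof -
  have m[measurable]: "X \<in> measurable M M1" "Y \<in> measurable M M2" "Z \<in> measurable M M3"
    using I unfolding indep3_def by auto
  interpret D2: prob_space "distr M M2 Y" by (rule prob_space_distr) simp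
  interpret D3: prob_space "distr M M3 Z" by (rule prob_space_distr) simp
  show ?thesis
  proof (rule pair_measure_eqI[symmetric])
    show "sigma_finite_measure (distr M M2 Y)" "sigma_finite_measure (distr M M3 Z)"
      by (rule D2.sigma_finite_measure_axioms, rule D3.sigma_finite_measure_axioms)
    show "sets (distr M M2 Y \<Otimes>\<^sub>M distr M M3 Z) = sets (distr M (M2 \<Otimes>\<^sub>M M3) (\<lambda>\<omega>. (Y \<omega>, Z \<omega>)))"
      by simp
    fix A B assume A: "A \<in> sets (distr M M2 Y)" and B: "B \<in> sets (distr M M3 Z)"
    have AB: "A \<times> B \<in> sets (M2 \<Otimes>\<^sub>M M3)" using A B by auto
    have se: "(\<lambda>\<omega>. (Y \<omega>, Z \<omega>)) -` (A \<times> B) \<inter> space M = X -` space M1 \<inter> Y -` A \<inter> Z -` B \<inter> space M"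
      using measurable_space[OF m(1)] by auto
    have "emeasure (distr M (M2 \<Otimes>\<^sub>M M3) (\<lambda>\<omega>. (Y \<omega>, Z \<omega>))) (A \<times> B)
        = emeasure M ((\<lambda>\<omega>. (Y \<omega>, Z \<omega>)) -` (A \<times> B) \<inter> space M)"
      by (rule emeasure_distr) (use AB in simp_all)
    also have "\<dots> = emeasure M (X -` space M1 \<inter> Y -` A \<inter> Z -` B \<inter> space M)" by (simp only: se)
    also have "\<dots> = emeasure (distr M M1 X) (space M1) * emeasure (distr M M2 Y) A * emeasure (distr M M3 Z) B"
      using A B by (intro indep3_prob[OF I]) auto
    also have "emeasure (distr M M1 X) (space M1) = 1"
      using prob_space.emeasure_space_1[OF prob_space_distr[OF m(1)]] by simp
    finally show "emeasure (distr M M2 Y) A * emeasure (distr M M3 Z) B =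
        emeasure (distr M (M2 \<Otimes>\<^sub>M M3) (\<lambda>\<omega>. (Y \<omega>, Z \<omega>))) (A \<times> B)" by simp
  qed
qed

lemma indep3_pair13:
  assumes I: "indep3 M1 X M2 Y M3 Z"
  shows "distr M (M1 \<Otimes>\<^sub>M M3) (\<lambda>\<omega>. (X \<omega>, Z \<omega>)) = distr M M1 X \<Otimes>\<^sub>M distr M M3 Z"
proof -
  have m[measurable]: "X \<in> measurable M M1" "Y \<in> measurable M M2" "Z \<in> measurable M M3"
    using I unfolding indep3_def by auto
  interpret D1: prob_space "distr M M1 X" by (rule prob_space_distr) simp
  interpret D3: prob_space "distr M M3 Z" by (rule prob_space_distr) simp
  show ?thesis
  proof (rule pair_measure_eqI[symmetric])
    show "sigma_finite_measure (distr M M1 X)" "sigma_finite_measure (distr M M3 Z)"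
      by (rule D1.sigma_finite_measure_axioms, rule D3.sigma_finite_measure_axioms)
    show "sets (distr M M1 X \<Otimes>\<^sub>M distr M M3 Z) = sets (distr M (M1 \<Otimes>\<^sub>M M3) (\<lambda>\<omega>. (X \<omega>, Z \<omega>)))"
      by simp
    fix A B assume A: "A \<in> sets (distr M M1 X)" and B: "B \<in> sets (distr M M3 Z)"
    have AB: "A \<times> B \<in> sets (M1 \<Otimes>\<^sub>M M3)" using A B by auto
    have se: "(\<lambda>\<omega>. (X \<omega>, Z \<omega>)) -` (A \<times> B) \<inter> space M = X -` A \<inter> Y -` space M2 \<inter> Z -` B \<inter> space M"
      using measurable_space[OF m(2)] by auto
    have "emeasure (distr M (M1 \<Otimes>\<^sub>M M3) (\<lambda>\<omega>. (X \<omega>, Z \<omega>))) (A \<times> B)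
        = emeasure M ((\<lambda>\<omega>. (X \<omega>, Z \<omega>)) -` (A \<times> B) \<inter> space M)"
      by (rule emeasure_distr) (use AB in simp_all)
    also have "\<dots> = emeasure M (X -` A \<inter> Y -` space M2 \<inter> Z -` B \<inter> space M)" by (simp only: se)
    also have "\<dots> = emeasure (distr M M1 X) A * emeasure (distr M M2 Y) (space M2) * emeasure (distr M M3 Z) B"
      using A B by (intro indep3_prob[OF I]) auto
    also have "emeasure (distr M M2 Y) (space M2) = 1"
      using prob_space.emeasure_space_1[OF prob_space_distr[OF m(2)]] by simp
    finally show "emeasure (distr M M1 X) A * emeasure (distr M M3 Z) B =
        emeasure (distr M (M1 \<Otimes>\<^sub>M M3) (\<lambda>\<omega>. (X \<omega>, Z \<omega>))) (A \<times> B)" by simp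
  qed
qed

lemma indep3_triple:
  assumes I: "indep3 M1 X M2 Y M3 Z"
  shows "distr M (M1 \<Otimes>\<^sub>M (M2 \<Otimes>\<^sub>M M3)) (\<lambda>\<omega>. (X \<omega>, Y \<omega>, Z \<omega>)) =
         distr M M1 X \<Otimes>\<^sub>M (distr M M2 Y \<Otimes>\<^sub>M distr M M3 Z)"
proof -
  have m[measurable]: "X \<in> measurable M M1" "Y \<in> measurable M M2" "Z \<in> measurable M M3"
    using I unfolding indep3_def by auto
  interpret D1: prob_space "distr M M1 X" by (rule prob_space_distr) simp
  interpret D2: prob_space "distr M M2 Y" by (rule prob_space_distr) simp
  interpret D3: prob_space "distr M M3 Z" by (rule prob_space_distr) simp
  interpret D23: pair_prob_space "distr M M2 Y" "distr M M3 Z" ..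
  show ?thesis
  proof (rule pair_measure_eqI[symmetric])
    show "sigma_finite_measure (distr M M1 X)" by (rule D1.sigma_finite_measure_axioms)
    show "sigma_finite_measure (distr M M2 Y \<Otimes>\<^sub>M distr M M3 Z)" by unfold_locales
    show "sets (distr M M1 X \<Otimes>\<^sub>M (distr M M2 Y \<Otimes>\<^sub>M distr M M3 Z)) =
          sets (distr M (M1 \<Otimes>\<^sub>M (M2 \<Otimes>\<^sub>M M3)) (\<lambda>\<omega>. (X \<omega>, Y \<omega>, Z \<omega>)))"
      by simp
    fix A S assume A: "A \<in> sets (distr M M1 X)" and S: "S \<in> sets (distr M M2 Y \<Otimes>\<^sub>M distr M M3 Z)"
    then have A1: "A \<in> sets M1" and S1: "S \<in> sets (M2 \<Otimes>\<^sub>M M3)" by auto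
    define N1 where "N1 = distr (density M (indicator (X -` A \<inter> space M))) (M2 \<Otimes>\<^sub>M M3) (\<lambda>\<omega>. (Y \<omega>, Z \<omega>))"
    define N2 where "N2 = density (distr M M2 Y \<Otimes>\<^sub>M distr M M3 Z) (\<lambda>_. emeasure (distr M M1 X) A)"
    have XA: "X -` A \<inter> space M \<in> sets M" using A1 by measurable
    have eN1: "emeasure N1 T = emeasure M (X -` A \<inter> ((\<lambda>\<omega>. (Y \<omega>, Z \<omega>)) -` T \<inter> space M))"
      if T: "T \<in> sets (M2 \<Otimes>\<^sub>M M3)" for T
    proof -
      have T': "(\<lambda>\<omega>. (Y \<omega>, Z \<omega>)) -` T \<inter> space M \<in> sets M" using T by measurable
      have "emeasure N1 T = emeasure (density M (indicator (X -` A \<inter> space M))) ((\<lambda>\<omega>. (Y \<omega>, Z \<omega>)) -` T \<inter> space M)"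
        unfolding N1_def using T by (subst emeasure_distr) auto
      also have "\<dots> = (\<integral>\<^sup>+\<omega>. indicator (X -` A \<inter> space M) \<omega> * indicator ((\<lambda>\<omega>. (Y \<omega>, Z \<omega>)) -` T \<inter> space M) \<omega> \<partial>M)"
        using T' XA by (subst emeasure_density) (auto intro: borel_measurable_indicator)
      also have "\<dots> = (\<integral>\<^sup>+\<omega>. indicator (X -` A \<inter> ((\<lambda>\<omega>. (Y \<omega>, Z \<omega>)) -` T \<inter> space M)) \<omega> \<partial>M)"
        by (intro nn_integral_cong) (auto split: split_indicator)
      also have "\<dots> = emeasure M (X -` A \<inter> ((\<lambda>\<omega>. (Y \<omega>, Z \<omega>)) -` T \<inter> space M))"
      proof (rule nn_integral_indicator)
        have "X -` A \<inter> ((\<lambda>\<omega>. (Y \<omega>, Z \<omega>)) -` T \<inter> space M) = (X -` A \<inter> space M) \<inter> ((\<lambda>\<omega>. (Y \<omega>, Z \<omega>)) -` T \<inter> space M)"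
          by blast
        then show "X -` A \<inter> ((\<lambda>\<omega>. (Y \<omega>, Z \<omega>)) -` T \<inter> space M) \<in> sets M"
          using sets.Int[OF XA T'] by simp
      qed
      finally show ?thesis .
    qed
    have "N1 = N2"
    proof (rule measure_eqI_generator_eq[OF Int_stable_pair_measure_generator pair_measure_closed])
      fix T assume "T \<in> {a \<times> b |a b. a \<in> sets M2 \<and> b \<in> sets M3}"
      then obtain a b where T: "T = a \<times> b" and ab: "a \<in> sets M2" "b \<in> sets M3" by blast
      have "emeasure N1 T = emeasure M (X -` A \<inter> Y -` a \<inter> Z -` b \<inter> space M)"
        unfolding eN1[OF T[THEN ssubst, of "\<lambda>T. T \<in> sets (M2 \<Otimes>\<^sub>M M3)", OF pair_measureI[OF ab]]]
        unfolding T by (intro arg_cong[where f="emeasure M"]) auto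
      also have "\<dots> = emeasure (distr M M1 X) A * emeasure (distr M M2 Y) a * emeasure (distr M M3 Z) b"
        using A1 ab by (rule indep3_prob[OF I])
      also have "\<dots> = emeasure N2 T"
        unfolding N2_def T using ab
        by (subst emeasure_density_const) (auto simp: D3.emeasure_pair_measure_Times mult.assoc)
      finally show "emeasure N1 T = emeasure N2 T" .
    next
      show "sets N1 = sigma_sets (space M2 \<times> space M3) {a \<times> b |a b. a \<in> sets M2 \<and> b \<in> sets M3}"
        unfolding N1_def by (simp add: sets_pair_measure)
      show "sets N2 = sigma_sets (space M2 \<times> space M3) {a \<times> b |a b. a \<in> sets M2 \<and> b \<in> sets M3}"
        unfolding N2_def by (simp add: sets_pair_measure[symmetric])
      show "range (\<lambda>_. space M2 \<times> space M3) \<subseteq> {a \<times> b |a b. a \<in> sets M2 \<and> b \<in> sets M3}" by blast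
      show "(\<Union>i. space M2 \<times> space M3) = space M2 \<times> space M3" by simp
      have "emeasure N1 (space M2 \<times> space M3) \<le> emeasure M (space M)"
        by (subst eN1) (auto simp: space_pair_measure intro!: emeasure_mono)
      then show "emeasure N1 (space M2 \<times> space M3) \<noteq> \<infinity>"
        using emeasure_space_1 by (auto simp: top_unique)
    qed
    have "emeasure (distr M M1 X) A * emeasure (distr M M2 Y \<Otimes>\<^sub>M distr M M3 Z) S = emeasure N2 S"
      unfolding N2_def using S by (simp add: emeasure_density_const)
    also have "\<dots> = emeasure N1 S" by (simp add: \<open>N1 = N2\<close>)
    also have "\<dots> = emeasure M (X -` A \<inter> ((\<lambda>\<omega>. (Y \<omega>, Z \<omega>)) -` S \<inter> space M))"
      using S1 by (rule eN1)
    also have "\<dots> = emeasure (distr M (M1 \<Otimes>\<^sub>M (M2 \<Otimes>\<^sub>M M3)) (\<lambda>\<omega>. (X \<omega>, Y \<omega>, Z \<omega>))) (A \<times> S)"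
      using A1 S1 by (subst emeasure_distr) (auto intro!: arg_cong[where f="emeasure M"])
    finally show "emeasure (distr M M1 X) A * emeasure (distr M M2 Y \<Otimes>\<^sub>M distr M M3 Z) S =
        emeasure (distr M (M1 \<Otimes>\<^sub>M (M2 \<Otimes>\<^sub>M M3)) (\<lambda>\<omega>. (X \<omega>, Y \<omega>, Z \<omega>))) (A \<times> S)" .
  qed
qed

end

context prob_space
begin

lemma indep3_nn13:
  assumes I: "indep3 M1 X M2 Y M3 Z" and g[measurable]: "g \<in> borel_measurable (M1 \<Otimes>\<^sub>M M3)"
  shows "(\<integral>\<^sup>+\<omega>. g (X \<omega>, Z \<omega>) \<partial>M) = (\<integral>\<^sup>+z. \<integral>\<^sup>+x. g (x, z) \<partial>distr M M1 X \<partial>distr M M3 Z)"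
proof -
  have m[measurable]: "X \<in> measurable M M1" "Y \<in> measurable M M2" "Z \<in> measurable M M3"
    using I unfolding indep3_def by auto
  interpret D1: prob_space "distr M M1 X" by (rule prob_space_distr) simp
  interpret D3: prob_space "distr M M3 Z" by (rule prob_space_distr) simp
  interpret D13: pair_prob_space "distr M M1 X" "distr M M3 Z" ..
  have "(\<integral>\<^sup>+\<omega>. g (X \<omega>, Z \<omega>) \<partial>M) = (\<integral>\<^sup>+p. g p \<partial>distr M (M1 \<Otimes>\<^sub>M M3) (\<lambda>\<omega>. (X \<omega>, Z \<omega>)))"
    by (subst nn_integral_distr) auto
  also have "\<dots> = (\<integral>\<^sup>+p. g p \<partial>(distr M M1 X \<Otimes>\<^sub>M distr M M3 Z))"
    by (simp add: indep3_pair13[OF I])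
  also have "\<dots> = (\<integral>\<^sup>+z. \<integral>\<^sup>+x. g (x, z) \<partial>distr M M1 X \<partial>distr M M3 Z)"
    by (rule D13.nn_integral_snd[symmetric]) simp
  finally show ?thesis .
qed

lemma indep3_nn23:
  assumes I: "indep3 M1 X M2 Y M3 Z" and g[measurable]: "g \<in> borel_measurable (M2 \<Otimes>\<^sub>M M3)"
  shows "(\<integral>\<^sup>+\<omega>. g (Y \<omega>, Z \<omega>) \<partial>M) = (\<integral>\<^sup>+z. \<integral>\<^sup>+y. g (y, z) \<partial>distr M M2 Y \<partial>distr M M3 Z)"
proof -
  have m[measurable]: "X \<in> measurable M M1" "Y \<in> measurable M M2" "Z \<in> measurable M M3"
    using I unfolding indep3_def by auto
  interpret D2: prob_space "distr M M2 Y" by (rule prob_space_distr) simp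
  interpret D3: prob_space "distr M M3 Z" by (rule prob_space_distr) simp
  interpret D23: pair_prob_space "distr M M2 Y" "distr M M3 Z" ..
  have "(\<integral>\<^sup>+\<omega>. g (Y \<omega>, Z \<omega>) \<partial>M) = (\<integral>\<^sup>+p. g p \<partial>distr M (M2 \<Otimes>\<^sub>M M3) (\<lambda>\<omega>. (Y \<omega>, Z \<omega>)))"
    by (subst nn_integral_distr) auto
  also have "\<dots> = (\<integral>\<^sup>+p. g p \<partial>(distr M M2 Y \<Otimes>\<^sub>M distr M M3 Z))"
    by (simp add: indep3_pair23[OF I])
  also have "\<dots> = (\<integral>\<^sup>+z. \<integral>\<^sup>+y. g (y, z) \<partial>distr M M2 Y \<partial>distr M M3 Z)"
    by (rule D23.nn_integral_snd[symmetric]) simp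
  finally show ?thesis .
qed

lemma indep3_nn123:
  assumes I: "indep3 M1 X M2 Y M3 Z" and g[measurable]: "g \<in> borel_measurable (M1 \<Otimes>\<^sub>M (M2 \<Otimes>\<^sub>M M3))"
  shows "(\<integral>\<^sup>+\<omega>. g (X \<omega>, Y \<omega>, Z \<omega>) \<partial>M) =
         (\<integral>\<^sup>+x. \<integral>\<^sup>+z. \<integral>\<^sup>+y. g (x, y, z) \<partial>distr M M2 Y \<partial>distr M M3 Z \<partial>distr M M1 X)"
proof -
  have m[measurable]: "X \<in> measurable M M1" "Y \<in> measurable M M2" "Z \<in> measurable M M3"
    using I unfolding indep3_def by auto
  interpret D1: prob_space "distr M M1 X" by (rule prob_space_distr) simp
  interpret D2: prob_space "distr M M2 Y" by (rule prob_space_distr) simp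
  interpret D3: prob_space "distr M M3 Z" by (rule prob_space_distr) simp
  interpret D23: pair_prob_space "distr M M2 Y" "distr M M3 Z" ..
  interpret D123: pair_prob_space "distr M M1 X" "distr M M2 Y \<Otimes>\<^sub>M distr M M3 Z" ..
  have "(\<integral>\<^sup>+\<omega>. g (X \<omega>, Y \<omega>, Z \<omega>) \<partial>M) = (\<integral>\<^sup>+p. g p \<partial>distr M (M1 \<Otimes>\<^sub>M (M2 \<Otimes>\<^sub>M M3)) (\<lambda>\<omega>. (X \<omega>, Y \<omega>, Z \<omega>)))"
    by (subst nn_integral_distr) auto
  also have "\<dots> = (\<integral>\<^sup>+p. g p \<partial>(distr M M1 X \<Otimes>\<^sub>M (distr M M2 Y \<Otimes>\<^sub>M distr M M3 Z)))"
    by (simp add: indep3_triple[OF I])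
  also have "\<dots> = (\<integral>\<^sup>+x. \<integral>\<^sup>+q. g (x, q) \<partial>(distr M M2 Y \<Otimes>\<^sub>M distr M M3 Z) \<partial>distr M M1 X)"
    by (rule D23.P.nn_integral_fst[symmetric]) simp
  also have "\<dots> = (\<integral>\<^sup>+x. \<integral>\<^sup>+z. \<integral>\<^sup>+y. g (x, y, z) \<partial>distr M M2 Y \<partial>distr M M3 Z \<partial>distr M M1 X)"
  proof (rule nn_integral_cong)
    fix x assume "x \<in> space (distr M M1 X)"
    then have [measurable]: "x \<in> space M1" by simp
    show "(\<integral>\<^sup>+q. g (x, q) \<partial>(distr M M2 Y \<Otimes>\<^sub>M distr M M3 Z)) =
          (\<integral>\<^sup>+z. \<integral>\<^sup>+y. g (x, y, z) \<partial>distr M M2 Y \<partial>distr M M3 Z)"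
      by (rule D23.nn_integral_snd[symmetric]) measurable
  qed
  finally show ?thesis .
qed

end

locale ctx10 =
  fixes M :: "'a measure" and t0 T :: real
    and x0 :: "'a \<Rightarrow> real" and a :: "real \<Rightarrow> 'a \<Rightarrow> real"
    and \<nu> :: "nat \<Rightarrow> real" and \<phi> :: "nat \<Rightarrow> real \<Rightarrow> real" and \<xi> :: "nat \<Rightarrow> 'a \<Rightarrow> real"
    and f0 :: "real \<Rightarrow> real" and fxi1 :: "real \<Rightarrow> real"
    and fxi :: "nat \<Rightarrow> (nat \<Rightarrow> real) \<Rightarrow> real" and t :: real
  assumes P: "prob_space M"
    and tT: "t0 < T"
    and KL: "KL_expansion M t0 T a \<nu> \<phi> \<xi>" and nu1: "\<nu> 1 > 0"
    and H1: "L2_process M t0 T a"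
    and f0_nonneg: "\<And>z. 0 \<le> f0 z"
    and f0_dens: "distributed M lborel x0 (\<lambda>z. ennreal (f0 z))"
    and fxi1_nonneg: "\<And>z. 0 \<le> fxi1 z"
    and fxi1_dens: "distributed M lborel (\<xi> 1) (\<lambda>z. ennreal (fxi1 z))"
    and H2_indep: "\<And>N. N \<ge> 2 \<Longrightarrow> prob_space.indep3 M lborel x0 lborel (\<xi> 1)
                    (PiM {2..N} (\<lambda>_. lborel)) (\<lambda>\<omega>. restrict (\<lambda>j. \<xi> j \<omega>) {2..N})"
    and H3: "continuous_on UNIV fxi1" "bounded (range fxi1)"
    and H4: "\<And>t. t \<in> {t0<..T} \<Longrightarrow> (LINT s:{t0..t}|lborel. \<phi> 1 s) \<noteq> 0"
    and fxi_nonneg: "\<And>N y. 0 \<le> fxi N y"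
    and fxi_dens: "\<And>N. N \<ge> 1 \<Longrightarrow> distributed M (PiM {1..N} (\<lambda>_. lborel)) (xi_vec \<xi> N)
                          (\<lambda>y. ennreal (fxi N y))"
    and t: "t \<in> {t0<..T}"
begin

sublocale prob_space M by (rule P)

definition "R = restrict_space lborel {t0..T}"
definition "Ig = {t0..t}"
definition "mu s = mean_proc M a s"
definition "ind s = (indicator Ig s :: real)"
definition "mm = (LINT s:Ig|lborel. mu s)"
definition "d j = sqrt (\<nu> j) * (LINT s:Ig|lborel. \<phi> j s)"
definition "c = d 1"
definition "S N \<omega> = mm + (\<Sum>j\<in>{1..N}. d j * \<xi> j \<omega>)"
definition "Y \<omega> = (LINT s:Ig|lborel. a s \<omega>)"
definition "DD N s \<omega> = a s \<omega> - mu s - (\<Sum>j\<in>{1..N}. sqrt (\<nu> j) * \<phi> j s * \<xi> j \<omega>)"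

lemma phi_meas[measurable]: "j \<ge> 1 \<Longrightarrow> \<phi> j \<in> borel_measurable lborel"
  and phi_sq: "j \<ge> 1 \<Longrightarrow> set_integrable lborel {t0..T} (\<lambda>s. (\<phi> j s)\<^sup>2)"
  and xi_meas[measurable]: "j \<ge> 1 \<Longrightarrow> \<xi> j \<in> borel_measurable M"
  and xi_sq: "j \<ge> 1 \<Longrightarrow> integrable M (\<lambda>\<omega>. (\<xi> j \<omega>)\<^sup>2)"
  using KL unfolding KL_expansion_def by auto

lemma L2conv: "(\<lambda>N. integral\<^sup>L (R \<Otimes>\<^sub>M M) (\<lambda>(s,\<omega>). (DD N s \<omega>)\<^sup>2)) \<longlonglongrightarrow> 0"
  using KL unfolding KL_expansion_def R_def DD_def mu_def by auto

lemma a_meas[measurable]: "(\<lambda>(s,\<omega>). a s \<omega>) \<in> borel_measurable (R \<Otimes>\<^sub>M M)"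
  and a_sq: "integrable (R \<Otimes>\<^sub>M M) (\<lambda>(s,\<omega>). (a s \<omega>)\<^sup>2)"
  using H1 unfolding L2_process_def R_def by auto

lemma x0_meas[measurable]: "x0 \<in> borel_measurable M"
  using distributed_measurable[OF f0_dens] by simp

lemma space_R: "space R = {t0..T}"
  unfolding R_def by (simp add: space_restrict_space)

lemma Ig_sub: "Ig \<subseteq> {t0..T}" using t unfolding Ig_def by auto

lemma finite_R: "finite_measure R"
proof (rule finite_measureI)
  have "emeasure R (space R) = emeasure lborel {t0..T}"
    unfolding space_R unfolding R_def by (rule emeasure_restrict_space) auto
  then show "emeasure R (space R) \<noteq> \<infinity>" using tT by simp
qed

sublocale R: finite_measure R by (rule finite_R)
sublocale RM: pair_sigma_finite R M ..
sublocale PR: finite_measure "R \<Otimes>\<^sub>M M"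
  by (rule finite_measure_pair_measure) (rule P[THEN prob_space.finite_measure], rule finite_R)

lemma ind_meas[measurable]: "ind \<in> borel_measurable R" "ind \<in> borel_measurable lborel"
  unfolding ind_def Ig_def R_def by (auto intro!: measurable_restrict_space1)

lemma LINT_R: "(LINT s:Ig|lborel. f s) = (\<integral>s. ind s * f s \<partial>R)"
proof -
  have "(\<integral>s. ind s * f s \<partial>R) = (\<integral>s. indicator {t0..T} s *\<^sub>R (ind s * f s) \<partial>lborel)"
    unfolding R_def by (rule integral_restrict_space) auto
  also have "\<dots> = (LINT s:Ig|lborel. f s)"
    unfolding set_lebesgue_integral_def using Ig_sub
    by (intro Bochner_Integration.integral_cong) (auto simp: ind_def split: split_indicator)
  finally show ?thesis ..
qed

lemma set_int_R: "set_integrable lborel Ig f \<longleftrightarrow> integrable R (\<lambda>s. ind s * f s)"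
proof -
  have "integrable R (\<lambda>s. ind s * f s) \<longleftrightarrow> integrable lborel (\<lambda>s. indicator {t0..T} s *\<^sub>R (ind s * f s))"
    unfolding R_def by (rule integrable_restrict_space) auto
  also have "\<dots> \<longleftrightarrow> set_integrable lborel Ig f"
    unfolding set_integrable_def using Ig_sub
    by (intro Bochner_Integration.integrable_cong) (auto simp: ind_def split: split_indicator)
  finally show ?thesis ..
qed

lemma int_R_ind: "integrable R f \<Longrightarrow> integrable R (\<lambda>s. ind s * f s)"
proof -
  assume f: "integrable R f"
  show ?thesis
  proof (rule Bochner_Integration.integrable_bound[OF f])
    have [measurable]: "f \<in> borel_measurable R" using f by auto
    show "(\<lambda>s. ind s * f s) \<in> borel_measurable R" by measurable
  qed (auto simp: ind_def split: split_indicator)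
qed

lemma phi_R[measurable]: "j \<ge> 1 \<Longrightarrow> \<phi> j \<in> borel_measurable R"
  unfolding R_def by (auto intro!: measurable_restrict_space1)

lemma phi_sq_R: "j \<ge> 1 \<Longrightarrow> integrable R (\<lambda>s. (\<phi> j s)\<^sup>2)"
proof -
  assume j: "j \<ge> 1"
  have "integrable lborel (\<lambda>s. indicator {t0..T} s *\<^sub>R (\<phi> j s)\<^sup>2)"
    using phi_sq[OF j] unfolding set_integrable_def .
  then show ?thesis unfolding R_def by (subst integrable_restrict_space) auto
qed

lemma phi_int_R: "j \<ge> 1 \<Longrightarrow> integrable R (\<phi> j)"
  by (rule R.square_integrable_imp_integrable) (auto intro: phi_sq_R)

lemma a_int: "integrable (R \<Otimes>\<^sub>M M) (\<lambda>(s,\<omega>). a s \<omega>)"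
proof -
  have "integrable (R \<Otimes>\<^sub>M M) (\<lambda>x. (case x of (s,\<omega>) \<Rightarrow> a s \<omega>) ^ 2)"
    using a_sq by (simp add: split_beta')
  then show ?thesis by (rule PR.square_integrable_imp_integrable[OF a_meas])
qed

lemma mu_meas[measurable]: "mu \<in> borel_measurable R"
proof -
  have "(\<lambda>s. \<integral>\<omega>. a s \<omega> \<partial>M) \<in> borel_measurable R" by measurable
  then show ?thesis unfolding mu_def mean_proc_def by simp
qed

lemma mu_int_R: "integrable R mu"
  using RM.integrable_fst[OF a_int] unfolding mu_def mean_proc_def by simp

lemma mu_sq_R: "integrable R (\<lambda>s. (mu s)\<^sup>2)"
proof (rule Bochner_Integration.integrable_bound)
  show "integrable R (\<lambda>s. \<integral>\<omega>. (a s \<omega>)\<^sup>2 \<partial>M)" using RM.integrable_fst[OF a_sq] by simp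
  show "(\<lambda>s. (mu s)\<^sup>2) \<in> borel_measurable R" by measurable
  show "AE s in R. norm ((mu s)\<^sup>2) \<le> norm (\<integral>\<omega>. (a s \<omega>)\<^sup>2 \<partial>M)"
    using RM.AE_integrable_fst[OF a_sq] AE_space[of R]
  proof eventually_elim
    case (elim s)
    have m: "a s \<in> borel_measurable M"
      using measurable_Pair2[OF a_meas, of s] elim by simp
    have i1: "integrable M (a s)"
      by (rule square_integrable_imp_integrable) (use elim m in auto)
    have "0 \<le> variance (a s)" by (rule variance_positive)
    also have "variance (a s) = expectation (\<lambda>\<omega>. (a s \<omega>)\<^sup>2) - (expectation (a s))\<^sup>2"
      by (rule variance_eq) (use i1 elim in auto)
    finally show ?case unfolding mu_def mean_proc_def by simp
  qed
qed

end

lemma (in pair_sigma_finite) integrable_mult_pair: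
  fixes f :: "'a \<Rightarrow> real" and g :: "'b \<Rightarrow> real"
  assumes f: "integrable M1 f" and g: "integrable M2 g"
  shows "integrable (M1 \<Otimes>\<^sub>M M2) (\<lambda>x. f (fst x) * g (snd x))"
proof (subst integrable_iff_bounded, safe)
  have [measurable]: "f \<in> borel_measurable M1" "g \<in> borel_measurable M2" using f g by auto
  show "(\<lambda>x. f (fst x) * g (snd x)) \<in> borel_measurable (M1 \<Otimes>\<^sub>M M2)" by measurable
  have "(\<integral>\<^sup>+x. ennreal (norm (f (fst x) * g (snd x))) \<partial>(M1 \<Otimes>\<^sub>M M2))
      = (\<integral>\<^sup>+x. \<integral>\<^sup>+y. ennreal \<bar>f x\<bar> * ennreal \<bar>g y\<bar> \<partial>M2 \<partial>M1)"
    by (subst M2.nn_integral_fst[symmetric]) (auto simp: abs_mult ennreal_mult)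
  also have "\<dots> = (\<integral>\<^sup>+x. ennreal \<bar>f x\<bar> * (\<integral>\<^sup>+y. ennreal \<bar>g y\<bar> \<partial>M2) \<partial>M1)"
    by (simp add: nn_integral_cmult)
  also have "\<dots> = (\<integral>\<^sup>+x. ennreal \<bar>f x\<bar> \<partial>M1) * (\<integral>\<^sup>+y. ennreal \<bar>g y\<bar> \<partial>M2)"
    by (simp add: nn_integral_multc)
  also have "\<dots> < \<infinity>"
    using f g unfolding integrable_iff_bounded by (simp add: ennreal_mult_less_top)
  finally show "(\<integral>\<^sup>+x. ennreal (norm (f (fst x) * g (snd x))) \<partial>(M1 \<Otimes>\<^sub>M M2)) < \<infinity>" .
qed

lemma sq_int_add:
  fixes f g :: "'a \<Rightarrow> real"
  assumes [measurable]: "f \<in> borel_measurable N" "g \<in> borel_measurable N"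
    and fi: "integrable N (\<lambda>x. (f x)\<^sup>2)" and gi: "integrable N (\<lambda>x. (g x)\<^sup>2)"
  shows "integrable N (\<lambda>x. (f x + g x)\<^sup>2)"
proof (rule Bochner_Integration.integrable_bound)
  show "integrable N (\<lambda>x. 2 * (f x)\<^sup>2 + 2 * (g x)\<^sup>2)" using fi gi by auto
  show "(\<lambda>x. (f x + g x)\<^sup>2) \<in> borel_measurable N" by measurable
  show "AE x in N. norm ((f x + g x)\<^sup>2) \<le> norm (2 * (f x)\<^sup>2 + 2 * (g x)\<^sup>2)"
  proof (rule AE_I2)
    fix x
    have "0 \<le> (f x - g x)\<^sup>2" by simp
    then have h: "(f x + g x)\<^sup>2 \<le> 2 * (f x)\<^sup>2 + 2 * (g x)\<^sup>2"
      unfolding power2_sum power2_diff by linarith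
    have "0 \<le> 2 * (f x)\<^sup>2 + 2 * (g x)\<^sup>2" by simp
    then show "norm ((f x + g x)\<^sup>2) \<le> norm (2 * (f x)\<^sup>2 + 2 * (g x)\<^sup>2)"
      using h by (simp add: abs_of_nonneg)
  qed
qed

lemma sq_int_neg:
  fixes f :: "'a \<Rightarrow> real"
  shows "integrable N (\<lambda>x. (f x)\<^sup>2) \<Longrightarrow> integrable N (\<lambda>x. (- f x)\<^sup>2)"
  by simp

lemma sq_int_cmult:
  fixes f :: "'a \<Rightarrow> real"
  shows "integrable N (\<lambda>x. (f x)\<^sup>2) \<Longrightarrow> integrable N (\<lambda>x. (k * f x)\<^sup>2)"
  by (simp add: power_mult_distrib)

lemma sq_int_sum:
  fixes f :: "nat \<Rightarrow> 'a \<Rightarrow> real"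
  assumes "finite A" "\<And>i. i \<in> A \<Longrightarrow> f i \<in> borel_measurable N"
    "\<And>i. i \<in> A \<Longrightarrow> integrable N (\<lambda>x. (f i x)\<^sup>2)"
  shows "integrable N (\<lambda>x. (\<Sum>i\<in>A. f i x)\<^sup>2)"
  using assms
proof (induction A rule: finite_induct)
  case empty then show ?case by simp
next
  case (insert i A)
  have m: "(\<lambda>x. \<Sum>i\<in>A. f i x) \<in> borel_measurable N"
    using insert.prems(1) by (intro borel_measurable_sum) auto
  show ?case
    using sq_int_add[OF insert.prems(1)[of i] m insert.prems(2)[of i] insert.IH] insert by simp
qed

lemma squeeze_eps:
  fixes E Q :: "nat \<Rightarrow> real"
  assumes E0: "\<And>N. 0 \<le> E N" and Eb: "\<And>N \<epsilon>. \<epsilon> > 0 \<Longrightarrow> E N \<le> \<epsilon> * C + Q N / \<epsilon>"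
    and C: "0 \<le> C" and Q: "Q \<longlonglongrightarrow> 0"
  shows "E \<longlonglongrightarrow> 0"
proof (rule tendstoI)
  fix e :: real assume e: "e > 0"
  define \<epsilon> where "\<epsilon> = e / (2 * (C + 1))"
  have ep: "\<epsilon> > 0" using e C by (simp add: \<epsilon>_def)
  have "\<epsilon> * e / 2 > 0" using ep e by simp
  then have "eventually (\<lambda>N. dist (Q N) 0 < \<epsilon> * e / 2) sequentially"
    using Q unfolding tendsto_iff by blast
  then show "eventually (\<lambda>N. dist (E N) 0 < e) sequentially"
  proof eventually_elim
    case (elim N)
    have q: "Q N / \<epsilon> < e / 2" using elim ep by (simp add: divide_less_eq mult.commute)
    have c: "\<epsilon> * C < e / 2"
    proof -
      have "\<epsilon> * C = e * C / (2 * (C + 1))" by (simp add: \<epsilon>_def)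
      also have "\<dots> < e / 2" using e C by (simp add: divide_less_eq field_simps)
      finally show ?thesis .
    qed
    have "E N < e" using Eb[OF ep, of N] q c by linarith
    then show ?case using E0[of N] by simp
  qed
qed

context ctx10
begin

lemma phiI_int: "j \<ge> 1 \<Longrightarrow> integrable R (\<lambda>s. ind s * \<phi> j s)"
  by (rule int_R_ind[OF phi_int_R])

lemma muI_int: "integrable R (\<lambda>s. ind s * mu s)"
  by (rule int_R_ind[OF mu_int_R])

lemma mm_R: "mm = (\<integral>s. ind s * mu s \<partial>R)"
  unfolding mm_def by (rule LINT_R)

lemma d_R: "d j = sqrt (\<nu> j) * (\<integral>s. ind s * \<phi> j s \<partial>R)"
  unfolding d_def by (simp add: LINT_R)

lemma int_sum_phi: "(\<integral>s. (\<Sum>j\<in>{1..N}. k j * (ind s * \<phi> j s)) \<partial>R) = (\<Sum>j\<in>{1..N}. k j * (\<integral>s. ind s * \<phi> j s \<partial>R))"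
proof -
  have "(\<integral>s. (\<Sum>j\<in>{1..N}. k j * (ind s * \<phi> j s)) \<partial>R) = (\<Sum>j\<in>{1..N}. (\<integral>s. k j * (ind s * \<phi> j s) \<partial>R))"
    by (rule Bochner_Integration.integral_sum) (auto intro!: Bochner_Integration.integrable_mult_right phiI_int)
  then show ?thesis by simp
qed

lemma int_sum_phi_int: "integrable R (\<lambda>s. \<Sum>j\<in>{1..N}. k j * (ind s * \<phi> j s))"
  by (intro Bochner_Integration.integrable_sum Bochner_Integration.integrable_mult_right phiI_int) auto

lemma K_lin: "K_a M a \<nu> \<phi> t0 N t y = mm + (\<Sum>j\<in>{1..N}. d j * y j)"
proof -
  have "K_a M a \<nu> \<phi> t0 N t y = (LINT s:Ig|lborel. mu s + (\<Sum>j\<in>{1..N}. sqrt (\<nu> j) * \<phi> j s * y j))"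
    unfolding K_a_def Ig_def mu_def ..
  also have "\<dots> = (\<integral>s. ind s * (mu s + (\<Sum>j\<in>{1..N}. sqrt (\<nu> j) * \<phi> j s * y j)) \<partial>R)"
    by (rule LINT_R)
  also have "\<dots> = (\<integral>s. ind s * mu s + (\<Sum>j\<in>{1..N}. (sqrt (\<nu> j) * y j) * (ind s * \<phi> j s)) \<partial>R)"
    by (intro Bochner_Integration.integral_cong) (auto simp: algebra_simps sum_distrib_left)
  also have "\<dots> = (\<integral>s. ind s * mu s \<partial>R) + (\<integral>s. (\<Sum>j\<in>{1..N}. (sqrt (\<nu> j) * y j) * (ind s * \<phi> j s)) \<partial>R)"
    by (rule Bochner_Integration.integral_add[OF muI_int int_sum_phi_int])
  also have "\<dots> = (\<integral>s. ind s * mu s \<partial>R) + (\<Sum>j\<in>{1..N}. (sqrt (\<nu> j) * y j) * (\<integral>s. ind s * \<phi> j s \<partial>R))"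
    by (simp only: int_sum_phi)
  also have "\<dots> = mm + (\<Sum>j\<in>{1..N}. d j * y j)"
    unfolding mm_R d_R by (simp add: ac_simps)
  finally show ?thesis .
qed

lemma Y_R: "Y \<omega> = (\<integral>s. ind s * a s \<omega> \<partial>R)"
  unfolding Y_def by (rule LINT_R)

lemma aI_int: "integrable (R \<Otimes>\<^sub>M M) (\<lambda>(s,\<omega>). ind s * a s \<omega>)"
proof (rule Bochner_Integration.integrable_bound[OF a_int])
  show "(\<lambda>(s,\<omega>). ind s * a s \<omega>) \<in> borel_measurable (R \<Otimes>\<^sub>M M)" by measurable
  show "AE x in R \<Otimes>\<^sub>M M. norm (case x of (s,\<omega>) \<Rightarrow> ind s * a s \<omega>) \<le> norm (case x of (s,\<omega>) \<Rightarrow> a s \<omega>)"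
    by (intro AE_I2) (auto simp: ind_def abs_mult split: split_indicator)
qed

lemma Y_int: "integrable M Y"
proof -
  have "integrable M (\<lambda>\<omega>. \<integral>s. ind s * a s \<omega> \<partial>R)"
    using RM.integrable_snd[OF aI_int] by simp
  then show ?thesis unfolding Y_R[abs_def] .
qed

lemma Y_meas[measurable]: "Y \<in> borel_measurable M"
  using Y_int by auto

lemma AE_a: "AE \<omega> in M. integrable R (\<lambda>s. a s \<omega>)"
  using RM.AE_integrable_snd[OF a_int] by simp

lemma xi_int: "j \<ge> 1 \<Longrightarrow> integrable M (\<xi> j)"
  by (rule square_integrable_imp_integrable) (auto intro: xi_sq)

lemma S_int: "integrable M (S N)"
  unfolding S_def[abs_def] by (intro Bochner_Integration.integrable_add integrable_const Bochner_Integration.integrable_sum Bochner_Integration.integrable_mult_right xi_int) auto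

lemma S_meas[measurable]: "S N \<in> borel_measurable M"
  using S_int by auto

lemma DD_int_R: "integrable R (\<lambda>s. a s \<omega>) \<Longrightarrow> integrable R (\<lambda>s. DD N s \<omega>)"
  unfolding DD_def
  by (intro Bochner_Integration.integrable_diff Bochner_Integration.integrable_sum Bochner_Integration.integrable_mult_left Bochner_Integration.integrable_mult_right mu_int_R phi_int_R) auto

lemma YS_eq:
  assumes ai: "integrable R (\<lambda>s. a s \<omega>)"
  shows "Y \<omega> - S N \<omega> = (\<integral>s. ind s * DD N s \<omega> \<partial>R)"
proof -
  have aiI: "integrable R (\<lambda>s. ind s * a s \<omega>)" by (rule int_R_ind[OF ai])
  have "(\<integral>s. ind s * DD N s \<omega> \<partial>R) =
        (\<integral>s. ind s * a s \<omega> - ind s * mu s - (\<Sum>j\<in>{1..N}. (sqrt (\<nu> j) * \<xi> j \<omega>) * (ind s * \<phi> j s)) \<partial>R)"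
    unfolding DD_def by (intro Bochner_Integration.integral_cong) (auto simp: algebra_simps sum_distrib_left)
  also have "\<dots> = (\<integral>s. ind s * a s \<omega> - ind s * mu s \<partial>R)
        - (\<integral>s. (\<Sum>j\<in>{1..N}. (sqrt (\<nu> j) * \<xi> j \<omega>) * (ind s * \<phi> j s)) \<partial>R)"
    by (rule Bochner_Integration.integral_diff[OF Bochner_Integration.integrable_diff[OF aiI muI_int] int_sum_phi_int])
  also have "\<dots> = (\<integral>s. ind s * a s \<omega> \<partial>R) - (\<integral>s. ind s * mu s \<partial>R)
        - (\<Sum>j\<in>{1..N}. (sqrt (\<nu> j) * \<xi> j \<omega>) * (\<integral>s. ind s * \<phi> j s \<partial>R))"
    by (simp only: int_sum_phi Bochner_Integration.integral_diff[OF aiI muI_int])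
  also have "\<dots> = Y \<omega> - S N \<omega>"
    unfolding Y_R S_def mm_R d_R by (simp add: ac_simps)
  finally show ?thesis ..
qed

lemma YS_bound:
  assumes ai: "integrable R (\<lambda>s. a s \<omega>)"
  shows "\<bar>S N \<omega> - Y \<omega>\<bar> \<le> (\<integral>s. \<bar>DD N s \<omega>\<bar> \<partial>R)"
proof -
  have di: "integrable R (\<lambda>s. DD N s \<omega>)" by (rule DD_int_R[OF ai])
  have "\<bar>S N \<omega> - Y \<omega>\<bar> = \<bar>\<integral>s. ind s * DD N s \<omega> \<partial>R\<bar>"
    using YS_eq[OF ai, of N] by simp
  also have "\<dots> \<le> (\<integral>s. \<bar>ind s * DD N s \<omega>\<bar> \<partial>R)" by (rule integral_abs_bound)
  also have "\<dots> \<le> (\<integral>s. \<bar>DD N s \<omega>\<bar> \<partial>R)"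
    using integrable_abs[OF int_R_ind[OF di]] integrable_abs[OF di]
    by (intro integral_mono) (auto simp: ind_def abs_mult split: split_indicator)
  finally show ?thesis .
qed

end

lemma sq_int_diff:
  fixes f g :: "'a \<Rightarrow> real"
  assumes "f \<in> borel_measurable N" "g \<in> borel_measurable N"
    and "integrable N (\<lambda>x. (f x)\<^sup>2)" "integrable N (\<lambda>x. (g x)\<^sup>2)"
  shows "integrable N (\<lambda>x. (f x - g x)\<^sup>2)"
  using sq_int_add[of f N "\<lambda>x. - g x"] assms by simp

lemma abs_le_eps:
  fixes x \<epsilon> :: real
  assumes e: "\<epsilon> > 0"
  shows "\<bar>x\<bar> \<le> \<epsilon> + x\<^sup>2 / \<epsilon>"
proof (cases "\<bar>x\<bar> \<le> \<epsilon>")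
  case True
  have "0 \<le> x\<^sup>2 / \<epsilon>" using e by simp
  then show ?thesis using True by linarith
next
  case False
  have "\<bar>x\<bar> * \<epsilon> \<le> \<bar>x\<bar> * \<bar>x\<bar>" using False by (intro mult_left_mono) auto
  then have "\<bar>x\<bar> \<le> x\<^sup>2 / \<epsilon>" using e by (simp add: pos_le_divide_eq power2_eq_square)
  then show ?thesis using e by linarith
qed

context ctx10
begin

lemma DD_meas[measurable]: "(\<lambda>x. DD N (fst x) (snd x)) \<in> borel_measurable (R \<Otimes>\<^sub>M M)"
proof -
  have [measurable]: "(\<lambda>x. a (fst x) (snd x)) \<in> borel_measurable (R \<Otimes>\<^sub>M M)"
    using a_meas by (simp add: split_beta')
  have [measurable]: "\<And>j. j \<in> {1..N} \<Longrightarrow> (\<lambda>x. \<phi> j (fst x)) \<in> borel_measurable (R \<Otimes>\<^sub>M M)"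
    "\<And>j. j \<in> {1..N} \<Longrightarrow> (\<lambda>x. \<xi> j (snd x)) \<in> borel_measurable (R \<Otimes>\<^sub>M M)"
    by (auto intro: measurable_compose[OF measurable_fst] measurable_compose[OF measurable_snd])
  show ?thesis unfolding DD_def by measurable
qed

lemma DD_sq_int: "integrable (R \<Otimes>\<^sub>M M) (\<lambda>(s,\<omega>). (DD N s \<omega>)\<^sup>2)"
proof -
  let ?A1 = "\<lambda>x. a (fst x) (snd x)"
  let ?A2 = "\<lambda>x. mu (fst x)"
  let ?A3 = "\<lambda>j x. sqrt (\<nu> j) * \<phi> j (fst x) * \<xi> j (snd x)"
  have m1: "?A1 \<in> borel_measurable (R \<Otimes>\<^sub>M M)" using a_meas by (simp add: split_beta')
  have m2: "?A2 \<in> borel_measurable (R \<Otimes>\<^sub>M M)" by measurable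
  have m3: "?A3 j \<in> borel_measurable (R \<Otimes>\<^sub>M M)" if "j \<in> {1..N}" for j
  proof -
    have [measurable]: "\<phi> j \<in> borel_measurable R" "\<xi> j \<in> borel_measurable M" using that by auto
    show ?thesis by measurable
  qed
  have i1: "integrable (R \<Otimes>\<^sub>M M) (\<lambda>x. (?A1 x)\<^sup>2)" using a_sq by (simp add: split_beta')
  have i2: "integrable (R \<Otimes>\<^sub>M M) (\<lambda>x. (?A2 x)\<^sup>2)"
    using RM.integrable_mult_pair[OF mu_sq_R integrable_const[of "1::real"]] by simp
  have i3: "integrable (R \<Otimes>\<^sub>M M) (\<lambda>x. (?A3 j x)\<^sup>2)" if "j \<in> {1..N}" for j
  proof -
    have "integrable (R \<Otimes>\<^sub>M M) (\<lambda>x. (\<phi> j (fst x))\<^sup>2 * (\<xi> j (snd x))\<^sup>2)"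
      using RM.integrable_mult_pair[OF phi_sq_R xi_sq] that by auto
    then have "integrable (R \<Otimes>\<^sub>M M) (\<lambda>x. (sqrt (\<nu> j))\<^sup>2 * ((\<phi> j (fst x))\<^sup>2 * (\<xi> j (snd x))\<^sup>2))"
      by (rule Bochner_Integration.integrable_mult_right)
    then show ?thesis by (simp only: power_mult_distrib mult.assoc)
  qed
  have ms: "(\<lambda>x. \<Sum>j\<in>{1..N}. ?A3 j x) \<in> borel_measurable (R \<Otimes>\<^sub>M M)"
    using m3 by (intro borel_measurable_sum) auto
  have "integrable (R \<Otimes>\<^sub>M M) (\<lambda>x. (?A1 x - ?A2 x - (\<Sum>j\<in>{1..N}. ?A3 j x))\<^sup>2)"
    by (intro sq_int_diff borel_measurable_diff m1 m2 ms i1 i2 sq_int_sum m3 i3) auto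
  then show ?thesis unfolding DD_def by (simp add: split_beta')
qed

lemma DD_abs_int: "integrable (R \<Otimes>\<^sub>M M) (\<lambda>(s,\<omega>). \<bar>DD N s \<omega>\<bar>)"
proof -
  have "integrable (R \<Otimes>\<^sub>M M) (\<lambda>x. DD N (fst x) (snd x))"
    by (rule PR.square_integrable_imp_integrable[OF DD_meas]) (use DD_sq_int in \<open>simp add: split_beta'\<close>)
  then show ?thesis by (simp add: split_beta')
qed

lemma conv_SY: "(\<lambda>N. \<integral>\<omega>. \<bar>S N \<omega> - Y \<omega>\<bar> \<partial>M) \<longlonglongrightarrow> 0"
proof (rule squeeze_eps)
  define C where "C = measure (R \<Otimes>\<^sub>M M) (space (R \<Otimes>\<^sub>M M))"
  show "0 \<le> C" unfolding C_def by simp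
  show "(\<lambda>N. integral\<^sup>L (R \<Otimes>\<^sub>M M) (\<lambda>(s,\<omega>). (DD N s \<omega>)\<^sup>2)) \<longlonglongrightarrow> 0" by (rule L2conv)
  show "0 \<le> (\<integral>\<omega>. \<bar>S N \<omega> - Y \<omega>\<bar> \<partial>M)" for N by simp
  fix N :: nat and \<epsilon> :: real assume e: "\<epsilon> > 0"
  have "(\<integral>\<omega>. \<bar>S N \<omega> - Y \<omega>\<bar> \<partial>M) \<le> (\<integral>\<omega>. (\<integral>s. \<bar>DD N s \<omega>\<bar> \<partial>R) \<partial>M)"
  proof (rule integral_mono_AE)
    show "integrable M (\<lambda>\<omega>. \<bar>S N \<omega> - Y \<omega>\<bar>)"
      by (intro integrable_abs Bochner_Integration.integrable_diff S_int Y_int)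
    show "integrable M (\<lambda>\<omega>. \<integral>s. \<bar>DD N s \<omega>\<bar> \<partial>R)"
      using RM.integrable_snd[OF DD_abs_int] by simp
    show "AE \<omega> in M. \<bar>S N \<omega> - Y \<omega>\<bar> \<le> (\<integral>s. \<bar>DD N s \<omega>\<bar> \<partial>R)"
      using AE_a by eventually_elim (rule YS_bound)
  qed
  also have "\<dots> = integral\<^sup>L (R \<Otimes>\<^sub>M M) (\<lambda>(s,\<omega>). \<bar>DD N s \<omega>\<bar>)"
    using RM.integral_snd[OF DD_abs_int] by simp
  also have "\<dots> \<le> integral\<^sup>L (R \<Otimes>\<^sub>M M) (\<lambda>x. \<epsilon> + (case x of (s,\<omega>) \<Rightarrow> (DD N s \<omega>)\<^sup>2) / \<epsilon>)"
  proof (rule integral_mono)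
    show "integrable (R \<Otimes>\<^sub>M M) (\<lambda>(s,\<omega>). \<bar>DD N s \<omega>\<bar>)" by (rule DD_abs_int)
    show "integrable (R \<Otimes>\<^sub>M M) (\<lambda>x. \<epsilon> + (case x of (s,\<omega>) \<Rightarrow> (DD N s \<omega>)\<^sup>2) / \<epsilon>)"
      by (intro Bochner_Integration.integrable_add PR.integrable_const integrable_divide DD_sq_int)
    show "(case x of (s,\<omega>) \<Rightarrow> \<bar>DD N s \<omega>\<bar>) \<le> \<epsilon> + (case x of (s,\<omega>) \<Rightarrow> (DD N s \<omega>)\<^sup>2) / \<epsilon>" for x
      using abs_le_eps[OF e] by (simp add: split_beta')
  qed
  also have "\<dots> = \<epsilon> * C + integral\<^sup>L (R \<Otimes>\<^sub>M M) (\<lambda>(s,\<omega>). (DD N s \<omega>)\<^sup>2) / \<epsilon>"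
    unfolding C_def
    by (subst Bochner_Integration.integral_add) (auto intro!: integrable_divide DD_sq_int PR.integrable_const simp: mult.commute)
  finally show "(\<integral>\<omega>. \<bar>S N \<omega> - Y \<omega>\<bar> \<partial>M) \<le> \<epsilon> * C + integral\<^sup>L (R \<Otimes>\<^sub>M M) (\<lambda>(s,\<omega>). (DD N s \<omega>)\<^sup>2) / \<epsilon>" .
qed

end

context ctx10
begin

definition "xp N \<omega> = restrict (\<lambda>j. \<xi> j \<omega>) {2..N}"
definition "PiN N = PiM {2..N} (\<lambda>_. lborel :: real measure)"
definition "W N y = mm + (\<Sum>j\<in>{2..N}. d j * y j)"
definition "G x z v = (if 0 < x / z then fxi1 ((ln (x / z) - v) / c) else 0)"
definition "Bd = (SOME B. \<forall>z. \<bar>fxi1 z\<bar> \<le> B)"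

lemma c_nz: "c \<noteq> 0"
proof -
  have "(LINT s:{t0..t}|lborel. \<phi> 1 s) \<noteq> 0" by (rule H4[OF t])
  moreover have "sqrt (\<nu> 1) \<noteq> 0" using nu1 by simp
  ultimately show ?thesis unfolding c_def d_def Ig_def by simp
qed

lemma fxi1_meas[measurable]: "fxi1 \<in> borel_measurable borel"
  by (rule borel_measurable_continuous_onI[OF H3(1)])

lemma f0_meas[measurable]: "f0 \<in> borel_measurable borel"
  using distributed_real_measurable[OF _ f0_dens] f0_nonneg by simp

lemma Bd: "\<bar>fxi1 z\<bar> \<le> Bd"
proof -
  have "\<exists>B. \<forall>z. \<bar>fxi1 z\<bar> \<le> B" using H3(2) unfolding bounded_iff by auto
  then have "\<forall>z. \<bar>fxi1 z\<bar> \<le> Bd" unfolding Bd_def by (rule someI_ex)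
  then show ?thesis by blast
qed

lemma xp_meas[measurable]: "xp N \<in> measurable M (PiN N)"
  unfolding xp_def[abs_def] PiN_def by (intro measurable_restrict) auto

lemma W_meas[measurable]: "W N \<in> borel_measurable (PiN N)"
  unfolding W_def[abs_def] PiN_def by measurable

lemma W_meas'[measurable (raw)]: "f \<in> measurable K (PiN N) \<Longrightarrow> (\<lambda>x. W N (f x)) \<in> borel_measurable K"
  using measurable_compose[OF _ W_meas] by blast

lemma G_meas[measurable (raw)]:
  assumes [measurable]: "f \<in> borel_measurable K" "g \<in> borel_measurable K" "h \<in> borel_measurable K"
  shows "(\<lambda>x. G (f x) (g x) (h x)) \<in> borel_measurable K"
  unfolding G_def by measurable

lemma G_nonneg: "0 \<le> G x z v"
  unfolding G_def using fxi1_nonneg by auto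

lemma G_bd: "G x z v \<le> Bd"
  unfolding G_def using Bd fxi1_nonneg by (auto intro: order.trans[OF _ Bd])

lemma Bd_nonneg: "0 \<le> Bd" using Bd[of 0] by simp

lemma G_cont: "continuous_on UNIV (G x z)"
  unfolding G_def using c_nz by (cases "0 < x / z") (auto intro!: continuous_on_compose2[OF H3(1)] continuous_intros)

lemma S_split: "N \<ge> 1 \<Longrightarrow> S N \<omega> = c * \<xi> 1 \<omega> + W N (xp N \<omega>)"
proof -
  assume N: "N \<ge> 1"
  have "{1..N} = insert 1 {2..N}" using N by auto
  then have "(\<Sum>j\<in>{1..N}. d j * \<xi> j \<omega>) = d 1 * \<xi> 1 \<omega> + (\<Sum>j\<in>{2..N}. d j * \<xi> j \<omega>)" by simp
  moreover have "(\<Sum>j\<in>{2..N}. d j * xp N \<omega> j) = (\<Sum>j\<in>{2..N}. d j * \<xi> j \<omega>)"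
    unfolding xp_def by (intro sum.cong) auto
  ultimately show ?thesis unfolding S_def W_def c_def by simp
qed

lemma indep: "N \<ge> 2 \<Longrightarrow> indep3 lborel x0 lborel (\<xi> 1) (PiN N) (xp N)"
  using H2_indep unfolding xp_def[abs_def] PiN_def by simp

lemma law_x0: "distr M lborel x0 = density lborel f0"
  using distributed_distr_eq_density[OF f0_dens] by simp

lemma law_xi1: "distr M lborel (\<xi> 1) = density lborel fxi1"
  using distributed_distr_eq_density[OF fxi1_dens] by simp

lemma psi_subst:
  assumes x: "x \<noteq> 0"
  shows "(\<integral>\<^sup>+u. ennreal (fxi1 u) * ennreal (f0 (x * exp (- (c * u + v))) * exp (- (c * u + v))) \<partial>lborel)
       = ennreal (1 / (\<bar>c\<bar> * \<bar>x\<bar>)) * (\<integral>\<^sup>+z. ennreal (f0 z) * ennreal (G x z v) \<partial>lborel)"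
proof -
  define h where "h w = ennreal (f0 w * (w / x))" for w
  have [measurable]: "h \<in> borel_measurable borel" unfolding h_def by measurable
  have "(\<integral>\<^sup>+u. ennreal (fxi1 u) * ennreal (f0 (x * exp (- (c * u + v))) * exp (- (c * u + v))) \<partial>lborel)
      = (\<integral>\<^sup>+u. h (x * exp (- c * u + - v)) * ennreal (fxi1 u) \<partial>lborel)"
    using x by (intro nn_integral_cong) (simp add: h_def mult.commute)
  also have "\<dots> = (\<integral>\<^sup>+w. h w * ennreal (if 0 < w / x then fxi1 ((ln (w / x) - - v) / - c) / (\<bar>- c\<bar> * \<bar>w\<bar>) else 0) \<partial>lborel)"
    by (rule subst_main) (use fxi1_nonneg x c_nz in auto)
  also have "\<dots> = (\<integral>\<^sup>+z. ennreal (1 / (\<bar>c\<bar> * \<bar>x\<bar>)) * (ennreal (f0 z) * ennreal (G x z v)) \<partial>lborel)"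
  proof (rule nn_integral_cong)
    fix w :: real
    show "h w * ennreal (if 0 < w / x then fxi1 ((ln (w / x) - - v) / - c) / (\<bar>- c\<bar> * \<bar>w\<bar>) else 0)
        = ennreal (1 / (\<bar>c\<bar> * \<bar>x\<bar>)) * (ennreal (f0 w) * ennreal (G x w v))"
    proof (cases "0 < w / x")
      case True
      then have xw: "0 < x / w" by (auto simp: zero_less_divide_iff)
      then have w: "w \<noteq> 0" by auto
      have lnq: "ln (x / w) = - ln (w / x)"
        using ln_inverse[of "w / x"] by simp
      have arg: "(ln (w / x) - - v) / - c = (ln (x / w) - v) / c"
        using c_nz lnq by (simp add: field_simps)
      have aw: "\<bar>w\<bar> = (w / x) * \<bar>x\<bar>"
      proof -
        have "\<bar>w\<bar> = \<bar>(w / x) * x\<bar>" using x by simp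
        also have "\<dots> = \<bar>w / x\<bar> * \<bar>x\<bar>" by (rule abs_mult)
        also have "\<dots> = (w / x) * \<bar>x\<bar>" by (simp only: abs_of_pos[OF True])
        finally show ?thesis .
      qed
      have key: "f0 w * (w / x) * (fxi1 ((ln (x / w) - v) / c) / (\<bar>c\<bar> * \<bar>w\<bar>))
          = 1 / (\<bar>c\<bar> * \<bar>x\<bar>) * (f0 w * fxi1 ((ln (x / w) - v) / c))"
        unfolding aw using True x c_nz w by (simp add: field_simps)
      have nn1: "0 \<le> f0 w * (w / x)" using f0_nonneg[of w] True by (intro mult_nonneg_nonneg) auto
      have nn2: "0 \<le> fxi1 ((ln (x / w) - v) / c) / (\<bar>c\<bar> * \<bar>w\<bar>)" using fxi1_nonneg by simp
      have "h w * ennreal (if 0 < w / x then fxi1 ((ln (w / x) - - v) / - c) / (\<bar>- c\<bar> * \<bar>w\<bar>) else 0)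
          = ennreal (f0 w * (w / x)) * ennreal (fxi1 ((ln (x / w) - v) / c) / (\<bar>c\<bar> * \<bar>w\<bar>))"
        unfolding h_def using True arg by simp
      also have "\<dots> = ennreal (f0 w * (w / x) * (fxi1 ((ln (x / w) - v) / c) / (\<bar>c\<bar> * \<bar>w\<bar>)))"
        by (rule ennreal_mult[symmetric, OF nn1 nn2])
      also have "\<dots> = ennreal (1 / (\<bar>c\<bar> * \<bar>x\<bar>) * (f0 w * fxi1 ((ln (x / w) - v) / c)))"
        by (simp only: key)
      also have "\<dots> = ennreal (1 / (\<bar>c\<bar> * \<bar>x\<bar>)) * (ennreal (f0 w) * ennreal (G x w v))"
        unfolding G_def using xw f0_nonneg[of w] fxi1_nonneg
        by (simp add: ennreal_mult[symmetric])
      finally show ?thesis .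
    next
      case False
      then have "\<not> 0 < x / w" by (auto simp: zero_less_divide_iff)
      then show ?thesis using False unfolding G_def by simp
    qed
  qed
  also have "\<dots> = ennreal (1 / (\<bar>c\<bar> * \<bar>x\<bar>)) * (\<integral>\<^sup>+z. ennreal (f0 z) * ennreal (G x z v) \<partial>lborel)"
    by (rule nn_integral_cmult) measurable
  finally show ?thesis .
qed

end

context ctx10
begin

lemma f1N_nn:
  assumes N: "N \<ge> 2" and x: "x \<noteq> 0"
  shows "(\<integral>\<^sup>+y. ennreal (f0 (x * exp (- K_a M a \<nu> \<phi> t0 N t y)) * fxi N y * exp (- K_a M a \<nu> \<phi> t0 N t y)) \<partial>PiM {1..N} (\<lambda>_. lborel))
       = ennreal (1 / (\<bar>c\<bar> * \<bar>x\<bar>)) * (\<integral>\<^sup>+\<omega>. ennreal (G x (x0 \<omega>) (W N (xp N \<omega>))) \<partial>M)"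
proof -
  define psi where "psi v = f0 (x * exp (- v)) * exp (- v)" for v
  have psi_nn: "0 \<le> psi v" for v unfolding psi_def using f0_nonneg by simp
  have [measurable]: "psi \<in> borel_measurable borel" unfolding psi_def[abs_def] by measurable
  let ?P1 = "PiM {1..N} (\<lambda>_. lborel) :: (nat \<Rightarrow> real) measure"
  have N1: "N \<ge> 1" using N by simp
  have fxiN[measurable]: "fxi N \<in> borel_measurable ?P1"
    using distributed_real_measurable[OF _ fxi_dens[OF N1]] fxi_nonneg by simp
  have xv[measurable]: "xi_vec \<xi> N \<in> measurable M ?P1"
    using distributed_measurable[OF fxi_dens[OF N1]] .
  have Km[measurable]: "(\<lambda>y. mm + (\<Sum>j\<in>{1..N}. d j * y j)) \<in> borel_measurable ?P1" by measurable
  have I: "indep3 lborel x0 lborel (\<xi> 1) (PiN N) (xp N)" by (rule indep[OF N])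
  have "(\<integral>\<^sup>+y. ennreal (f0 (x * exp (- K_a M a \<nu> \<phi> t0 N t y)) * fxi N y * exp (- K_a M a \<nu> \<phi> t0 N t y)) \<partial>?P1)
      = (\<integral>\<^sup>+y. ennreal (fxi N y) * ennreal (psi (mm + (\<Sum>j\<in>{1..N}. d j * y j))) \<partial>?P1)"
    by (intro nn_integral_cong) (simp add: K_lin psi_def ennreal_mult'[symmetric] fxi_nonneg ac_simps)
  also have "\<dots> = (\<integral>\<^sup>+y. ennreal (psi (mm + (\<Sum>j\<in>{1..N}. d j * y j))) \<partial>density ?P1 (\<lambda>y. ennreal (fxi N y)))"
    by (rule nn_integral_density[symmetric]) measurable
  also have "\<dots> = (\<integral>\<^sup>+y. ennreal (psi (mm + (\<Sum>j\<in>{1..N}. d j * y j))) \<partial>distr M ?P1 (xi_vec \<xi> N))"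
    by (simp only: distributed_distr_eq_density[OF fxi_dens[OF N1]])
  also have "\<dots> = (\<integral>\<^sup>+\<omega>. ennreal (psi (mm + (\<Sum>j\<in>{1..N}. d j * xi_vec \<xi> N \<omega> j))) \<partial>M)"
    by (rule nn_integral_distr[OF xv]) measurable
  also have "\<dots> = (\<integral>\<^sup>+\<omega>. ennreal (psi (c * \<xi> 1 \<omega> + W N (xp N \<omega>))) \<partial>M)"
  proof (rule nn_integral_cong)
    fix \<omega>
    have "(\<Sum>j\<in>{1..N}. d j * xi_vec \<xi> N \<omega> j) = (\<Sum>j\<in>{1..N}. d j * \<xi> j \<omega>)"
      unfolding xi_vec_def by (intro sum.cong) auto
    then show "ennreal (psi (mm + (\<Sum>j\<in>{1..N}. d j * xi_vec \<xi> N \<omega> j))) = ennreal (psi (c * \<xi> 1 \<omega> + W N (xp N \<omega>)))"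
      using S_split[OF N1, of \<omega>] unfolding S_def by simp
  qed
  also have "\<dots> = (\<integral>\<^sup>+y'. \<integral>\<^sup>+u. ennreal (psi (c * u + W N y')) \<partial>distr M lborel (\<xi> 1) \<partial>distr M (PiN N) (xp N))"
    using indep3_nn23[OF I, of "\<lambda>p. ennreal (psi (c * fst p + W N (snd p)))"] by simp
  also have "\<dots> = (\<integral>\<^sup>+y'. ennreal (1 / (\<bar>c\<bar> * \<bar>x\<bar>)) * (\<integral>\<^sup>+z. ennreal (G x z (W N y')) \<partial>distr M lborel x0) \<partial>distr M (PiN N) (xp N))"
  proof (rule nn_integral_cong)
    fix y'
    have "(\<integral>\<^sup>+u. ennreal (psi (c * u + W N y')) \<partial>distr M lborel (\<xi> 1))
        = (\<integral>\<^sup>+u. ennreal (fxi1 u) * ennreal (psi (c * u + W N y')) \<partial>lborel)"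
      unfolding law_xi1 by (subst nn_integral_density) auto
    also have "\<dots> = ennreal (1 / (\<bar>c\<bar> * \<bar>x\<bar>)) * (\<integral>\<^sup>+z. ennreal (f0 z) * ennreal (G x z (W N y')) \<partial>lborel)"
      unfolding psi_def by (rule psi_subst[OF x])
    also have "(\<integral>\<^sup>+z. ennreal (f0 z) * ennreal (G x z (W N y')) \<partial>lborel) = (\<integral>\<^sup>+z. ennreal (G x z (W N y')) \<partial>distr M lborel x0)"
      unfolding law_x0 by (subst nn_integral_density) auto
    finally show "(\<integral>\<^sup>+u. ennreal (psi (c * u + W N y')) \<partial>distr M lborel (\<xi> 1)) =
        ennreal (1 / (\<bar>c\<bar> * \<bar>x\<bar>)) * (\<integral>\<^sup>+z. ennreal (G x z (W N y')) \<partial>distr M lborel x0)" .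
  qed
  also have "\<dots> = ennreal (1 / (\<bar>c\<bar> * \<bar>x\<bar>)) * (\<integral>\<^sup>+y'. \<integral>\<^sup>+z. ennreal (G x z (W N y')) \<partial>distr M lborel x0 \<partial>distr M (PiN N) (xp N))"
  proof (rule nn_integral_cmult)
    interpret D0: prob_space "distr M lborel x0" by (rule prob_space_distr) simp
    show "(\<lambda>y'. \<integral>\<^sup>+z. ennreal (G x z (W N y')) \<partial>distr M lborel x0) \<in> borel_measurable (distr M (PiN N) (xp N))"
      by (rule D0.borel_measurable_nn_integral) measurable
  qed
  also have "(\<integral>\<^sup>+y'. \<integral>\<^sup>+z. ennreal (G x z (W N y')) \<partial>distr M lborel x0 \<partial>distr M (PiN N) (xp N))
      = (\<integral>\<^sup>+\<omega>. ennreal (G x (x0 \<omega>) (W N (xp N \<omega>))) \<partial>M)"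
    using indep3_nn13[OF I, of "\<lambda>p. ennreal (G x (fst p) (W N (snd p)))"] by simp
  finally show ?thesis .
qed

lemma G_int: "integrable M (\<lambda>\<omega>. G x (x0 \<omega>) (V \<omega>))" if [measurable]: "V \<in> borel_measurable M"
  by (rule integrable_const_bound[where B=Bd]) (auto simp: G_nonneg G_bd)

lemma f1N_formula:
  assumes N: "N \<ge> 2" and x: "x \<noteq> 0"
  shows "f1N M a \<nu> \<phi> t0 f0 fxi N x t = (\<integral>\<omega>. G x (x0 \<omega>) (W N (xp N \<omega>)) \<partial>M) / (\<bar>c\<bar> * \<bar>x\<bar>)"
proof -
  let ?P1 = "PiM {1..N} (\<lambda>_. lborel) :: (nat \<Rightarrow> real) measure"
  have N1: "N \<ge> 1" using N by simp
  have fxiN[measurable]: "fxi N \<in> borel_measurable ?P1"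
    using distributed_real_measurable[OF _ fxi_dens[OF N1]] fxi_nonneg by simp
  have Kf: "(\<lambda>y. K_a M a \<nu> \<phi> t0 N t y) = (\<lambda>y. mm + (\<Sum>j\<in>{1..N}. d j * y j))"
    by (simp add: K_lin)
  have [measurable]: "(\<lambda>y. K_a M a \<nu> \<phi> t0 N t y) \<in> borel_measurable ?P1"
    unfolding Kf by measurable
  have "f1N M a \<nu> \<phi> t0 f0 fxi N x t =
    enn2real (\<integral>\<^sup>+y. ennreal (f0 (x * exp (- K_a M a \<nu> \<phi> t0 N t y)) * fxi N y * exp (- K_a M a \<nu> \<phi> t0 N t y)) \<partial>?P1)"
    unfolding f1N_def by (rule integral_eq_nn_integral, measurable) (auto simp: f0_nonneg fxi_nonneg)
  also have "\<dots> = enn2real (ennreal (1 / (\<bar>c\<bar> * \<bar>x\<bar>)) * ennreal (\<integral>\<omega>. G x (x0 \<omega>) (W N (xp N \<omega>)) \<partial>M))"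
    unfolding f1N_nn[OF N x]
    by (subst nn_integral_eq_integral) (auto intro!: G_int simp: G_nonneg)
  also have "\<dots> = (\<integral>\<omega>. G x (x0 \<omega>) (W N (xp N \<omega>)) \<partial>M) / (\<bar>c\<bar> * \<bar>x\<bar>)"
    by (subst ennreal_mult[symmetric]) (auto intro!: integral_nonneg simp: G_nonneg)
  finally show ?thesis .
qed

end

context ctx10
begin

definition "f1 x = (if x = 0 then 0 else (\<integral>\<omega>. G x (x0 \<omega>) (Y \<omega> - c * \<xi> 1 \<omega>) \<partial>M) / (\<bar>c\<bar> * \<bar>x\<bar>))"

lemma xi1_meas[measurable]: "\<xi> 1 \<in> borel_measurable M" by (rule xi_meas) simp

lemma f1_nonneg: "0 \<le> f1 x"
  unfolding f1_def by (auto intro!: divide_nonneg_nonneg integral_nonneg simp: G_nonneg)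

lemma f1_meas[measurable]: "f1 \<in> borel_measurable borel"
proof -
  have "(\<lambda>x. \<integral>\<omega>. G x (x0 \<omega>) (Y \<omega> - c * \<xi> 1 \<omega>) \<partial>M) \<in> borel_measurable borel"
    by (rule borel_measurable_lebesgue_integral) measurable
  then show ?thesis unfolding f1_def[abs_def] by measurable
qed

lemma f1N_conv:
  assumes x: "x \<noteq> 0"
  shows "(\<lambda>N. f1N M a \<nu> \<phi> t0 f0 fxi N x t) \<longlonglongrightarrow> f1 x"
proof (rule LIMSEQ_offset[where k=2])
  have V: "W (n + 2) (xp (n + 2) \<omega>) - (Y \<omega> - c * \<xi> 1 \<omega>) = S (n + 2) \<omega> - Y \<omega>" for n \<omega>
    using S_split[of "n + 2" \<omega>] by simp
  have "(\<lambda>n. \<integral>\<omega>. G x (x0 \<omega>) (W (n + 2) (xp (n + 2) \<omega>)) \<partial>M) \<longlonglongrightarrow> (\<integral>\<omega>. G x (x0 \<omega>) (Y \<omega> - c * \<xi> 1 \<omega>) \<partial>M)"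
    (is "?L \<longlonglongrightarrow> ?R")
  proof -
    have m1: "\<And>n. (\<lambda>\<omega>. W (n + 2) (xp (n + 2) \<omega>)) \<in> borel_measurable M" by measurable
    have m2: "(\<lambda>\<omega>. Y \<omega> - c * \<xi> 1 \<omega>) \<in> borel_measurable M" by measurable
    have i1: "\<And>n. integrable M (\<lambda>\<omega>. W (n + 2) (xp (n + 2) \<omega>) - (Y \<omega> - c * \<xi> 1 \<omega>))"
      unfolding V by (intro Bochner_Integration.integrable_diff S_int Y_int)
    have l1: "(\<lambda>n. \<integral>\<omega>. \<bar>W (n + 2) (xp (n + 2) \<omega>) - (Y \<omega> - c * \<xi> 1 \<omega>)\<bar> \<partial>M) \<longlonglongrightarrow> 0"
      unfolding V using LIMSEQ_ignore_initial_segment[OF conv_SY, of 2] by simp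
    have h1: "(\<lambda>(z, v). G x z v) \<in> borel_measurable (borel \<Otimes>\<^sub>M borel)" by measurable
    have h3: "\<And>z v. \<bar>G x z v\<bar> \<le> Bd" using G_nonneg G_bd by simp
    show ?thesis
      by (rule conv_bounded_L1[where V="\<lambda>n \<omega>. W (n + 2) (xp (n + 2) \<omega>)" and Vl="\<lambda>\<omega>. Y \<omega> - c * \<xi> 1 \<omega>",
            OF P x0_meas m1 m2 i1 l1 h1 G_cont h3])
  qed
  then have "(\<lambda>n. (\<integral>\<omega>. G x (x0 \<omega>) (W (n + 2) (xp (n + 2) \<omega>)) \<partial>M) / (\<bar>c\<bar> * \<bar>x\<bar>)) \<longlonglongrightarrow> f1 x"
  proof -
    have "(\<lambda>n. (\<integral>\<omega>. G x (x0 \<omega>) (W (n + 2) (xp (n + 2) \<omega>)) \<partial>M) / (\<bar>c\<bar> * \<bar>x\<bar>)) \<longlonglongrightarrow>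
          (\<integral>\<omega>. G x (x0 \<omega>) (Y \<omega> - c * \<xi> 1 \<omega>) \<partial>M) / (\<bar>c\<bar> * \<bar>x\<bar>)"
      by (rule tendsto_divide[OF \<open>?L \<longlonglongrightarrow> ?R\<close> tendsto_const]) (use c_nz x in simp)
    then show ?thesis unfolding f1_def using x by simp
  qed
  then show "(\<lambda>n. f1N M a \<nu> \<phi> t0 f0 fxi (n + 2) x t) \<longlonglongrightarrow> f1 x"
    using f1N_formula[OF _ x] by simp
qed

end

context ctx10
begin

definition "gN N w = (if w = 0 then 0 else (\<integral>\<omega>. G w (x0 \<omega>) (W N (xp N \<omega>)) \<partial>M) / (\<bar>c\<bar> * \<bar>w\<bar>))"

lemma gN_nonneg: "0 \<le> gN N w"
  unfolding gN_def by (auto intro!: divide_nonneg_nonneg integral_nonneg simp: G_nonneg)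

lemma gN_meas[measurable]: "gN N \<in> borel_measurable borel"
proof -
  have "(\<lambda>w. \<integral>\<omega>. G w (x0 \<omega>) (W N (xp N \<omega>)) \<partial>M) \<in> borel_measurable borel"
    by (rule borel_measurable_lebesgue_integral) measurable
  then show ?thesis unfolding gN_def[abs_def] by measurable
qed

lemma gN_eq: "N \<ge> 2 \<Longrightarrow> w \<noteq> 0 \<Longrightarrow> f1N M a \<nu> \<phi> t0 f0 fxi N w t = gN N w"
  using f1N_formula unfolding gN_def by simp

lemma gN_bound: "w \<noteq> 0 \<Longrightarrow> gN N w \<le> Bd / (\<bar>c\<bar> * \<bar>w\<bar>)"
proof -
  assume w: "w \<noteq> 0"
  have "(\<integral>\<omega>. G w (x0 \<omega>) (W N (xp N \<omega>)) \<partial>M) \<le> (\<integral>\<omega>. Bd \<partial>M)"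
    by (rule integral_mono) (auto intro!: G_int simp: G_bd)
  then have "(\<integral>\<omega>. G w (x0 \<omega>) (W N (xp N \<omega>)) \<partial>M) \<le> Bd" by (simp add: prob_space)
  then show ?thesis unfolding gN_def using w c_nz by (simp add: divide_right_mono)
qed

lemma gN_ennreal:
  assumes w: "w \<noteq> 0"
  shows "ennreal (gN N w) = ennreal (1 / (\<bar>c\<bar> * \<bar>w\<bar>)) * (\<integral>\<^sup>+\<omega>. ennreal (G w (x0 \<omega>) (W N (xp N \<omega>))) \<partial>M)"
proof -
  have "(\<integral>\<^sup>+\<omega>. ennreal (G w (x0 \<omega>) (W N (xp N \<omega>))) \<partial>M) = ennreal (\<integral>\<omega>. G w (x0 \<omega>) (W N (xp N \<omega>)) \<partial>M)"
    by (rule nn_integral_eq_integral) (auto intro!: G_int simp: G_nonneg)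
  then show ?thesis unfolding gN_def using w
    by (simp add: ennreal_mult[symmetric] integral_nonneg G_nonneg)
qed

definition "D0 = distr M lborel x0"
definition "Lx N = distr M (PiN N) (xp N)"

lemma sets_D0[simp, measurable_cong]: "sets D0 = sets borel" unfolding D0_def by simp
lemma sets_Lx[simp, measurable_cong]: "sets (Lx N) = sets (PiN N)" unfolding Lx_def by simp

lemma fst_D0[measurable]: "fst \<in> measurable (D0 \<Otimes>\<^sub>M A) borel"
  by (subst measurable_cong_sets[OF sets_pair_measure_cong[OF sets_D0 refl] refl]) simp
lemma snd_D0[measurable]: "snd \<in> measurable (A \<Otimes>\<^sub>M D0) borel"
  by (subst measurable_cong_sets[OF sets_pair_measure_cong[OF refl sets_D0] refl]) simp
lemma fst_Lx[measurable]: "fst \<in> measurable (Lx N \<Otimes>\<^sub>M A) (PiN N)"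
  by (subst measurable_cong_sets[OF sets_pair_measure_cong[OF sets_Lx refl] refl]) simp
lemma snd_Lx[measurable]: "snd \<in> measurable (A \<Otimes>\<^sub>M Lx N) (PiN N)"
  by (subst measurable_cong_sets[OF sets_pair_measure_cong[OF refl sets_Lx] refl]) simp

definition "XX \<psi> N z y' w = \<psi> w * ennreal (G w z (W N y') / (\<bar>c\<bar> * \<bar>w\<bar>))"

lemma XX_meas[measurable (raw)]:
  assumes [measurable]: "\<psi> \<in> borel_measurable borel" "f \<in> borel_measurable K" "g \<in> measurable K (PiN N)" "h \<in> borel_measurable K"
  shows "(\<lambda>k. XX \<psi> N (f k) (g k) (h k)) \<in> borel_measurable K"
  unfolding XX_def by measurable

lemma law_XN:
  fixes \<psi> :: "real \<Rightarrow> ennreal"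
  assumes N: "N \<ge> 2" and [measurable]: "\<psi> \<in> borel_measurable borel"
  shows "(\<integral>\<^sup>+\<omega>. \<psi> (x0 \<omega> * exp (S N \<omega>)) \<partial>M) = (\<integral>\<^sup>+w. \<psi> w * ennreal (gN N w) \<partial>lborel)"
proof -
  define D1 where "D1 = distr M lborel (\<xi> 1)"
  interpret D0: prob_space D0 unfolding D0_def by (rule prob_space_distr) simp
  interpret L: prob_space "Lx N" unfolding Lx_def by (rule prob_space_distr) simp
  interpret pLb: pair_sigma_finite lborel "Lx N" ..
  interpret pbD: pair_sigma_finite lborel D0 ..
  interpret pLD: pair_sigma_finite "Lx N" D0 ..
  have sD0[simp]: "space D0 = UNIV" unfolding D0_def by auto
  have sL[simp]: "space (Lx N) = space (PiN N)" unfolding Lx_def by auto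
  have I: "indep3 lborel x0 lborel (\<xi> 1) (PiN N) (xp N)" by (rule indep[OF N])
  have "(\<integral>\<^sup>+\<omega>. \<psi> (x0 \<omega> * exp (S N \<omega>)) \<partial>M) = (\<integral>\<^sup>+\<omega>. \<psi> (x0 \<omega> * exp (c * \<xi> 1 \<omega> + W N (xp N \<omega>))) \<partial>M)"
    using S_split N by simp
  also have "\<dots> = (\<integral>\<^sup>+z. \<integral>\<^sup>+y'. \<integral>\<^sup>+u. \<psi> (z * exp (c * u + W N y')) \<partial>D1 \<partial>Lx N \<partial>D0)"
    unfolding D0_def D1_def Lx_def
    using indep3_nn123[OF I, of "\<lambda>p. \<psi> (fst p * exp (c * fst (snd p) + W N (snd (snd p))))"] by simp
  also have "\<dots> = (\<integral>\<^sup>+z. \<integral>\<^sup>+y'. \<integral>\<^sup>+w. XX \<psi> N z y' w \<partial>lborel \<partial>Lx N \<partial>D0)"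
  proof (rule nn_integral_cong_AE)
    have "AE z in D0. z \<noteq> 0"
      unfolding D0_def law_x0 by (subst AE_density) (auto intro: AE_mp[OF AE_lborel_singleton[of 0]])
    then show "AE z in D0. (\<integral>\<^sup>+y'. \<integral>\<^sup>+u. \<psi> (z * exp (c * u + W N y')) \<partial>D1 \<partial>Lx N) = (\<integral>\<^sup>+y'. \<integral>\<^sup>+w. XX \<psi> N z y' w \<partial>lborel \<partial>Lx N)"
    proof eventually_elim
      case (elim z)
      show ?case
      proof (rule nn_integral_cong)
        fix y'
        have "(\<integral>\<^sup>+u. \<psi> (z * exp (c * u + W N y')) \<partial>D1) = (\<integral>\<^sup>+u. \<psi> (z * exp (c * u + W N y')) * ennreal (fxi1 u) \<partial>lborel)"
          unfolding D1_def law_xi1 by (subst nn_integral_density) (auto simp: mult.commute)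
        also have "\<dots> = (\<integral>\<^sup>+w. \<psi> w * ennreal (if 0 < w / z then fxi1 ((ln (w / z) - W N y') / c) / (\<bar>c\<bar> * \<bar>w\<bar>) else 0) \<partial>lborel)"
          by (rule subst_main) (use fxi1_nonneg elim c_nz in auto)
        also have "\<dots> = (\<integral>\<^sup>+w. XX \<psi> N z y' w \<partial>lborel)"
          unfolding XX_def G_def by (intro nn_integral_cong) auto
        finally show "(\<integral>\<^sup>+u. \<psi> (z * exp (c * u + W N y')) \<partial>D1) = (\<integral>\<^sup>+w. XX \<psi> N z y' w \<partial>lborel)" .
      qed
    qed
  qed
  also have "\<dots> = (\<integral>\<^sup>+z. \<integral>\<^sup>+w. \<integral>\<^sup>+y'. XX \<psi> N z y' w \<partial>Lx N \<partial>lborel \<partial>D0)"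
  proof (rule nn_integral_cong)
    fix z
    show "(\<integral>\<^sup>+y'. \<integral>\<^sup>+w. XX \<psi> N z y' w \<partial>lborel \<partial>Lx N) = (\<integral>\<^sup>+w. \<integral>\<^sup>+y'. XX \<psi> N z y' w \<partial>Lx N \<partial>lborel)"
      by (rule pLb.Fubini') measurable
  qed
  also have "\<dots> = (\<integral>\<^sup>+w. \<integral>\<^sup>+z. \<integral>\<^sup>+y'. XX \<psi> N z y' w \<partial>Lx N \<partial>D0 \<partial>lborel)"
    by (rule pbD.Fubini') measurable
  also have "\<dots> = (\<integral>\<^sup>+w. \<integral>\<^sup>+y'. \<integral>\<^sup>+z. XX \<psi> N z y' w \<partial>D0 \<partial>Lx N \<partial>lborel)"
  proof (rule nn_integral_cong)
    fix w
    show "(\<integral>\<^sup>+z. \<integral>\<^sup>+y'. XX \<psi> N z y' w \<partial>Lx N \<partial>D0) = (\<integral>\<^sup>+y'. \<integral>\<^sup>+z. XX \<psi> N z y' w \<partial>D0 \<partial>Lx N)"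
      by (rule pLD.Fubini') measurable
  qed
  also have "\<dots> = (\<integral>\<^sup>+w. \<psi> w * ennreal (gN N w) \<partial>lborel)"
  proof (rule nn_integral_cong_AE)
    show "AE w in lborel. (\<integral>\<^sup>+y'. \<integral>\<^sup>+z. XX \<psi> N z y' w \<partial>D0 \<partial>Lx N) = \<psi> w * ennreal (gN N w)"
      using AE_lborel_singleton[of 0]
    proof eventually_elim
      case (elim w)
      have Xe: "XX \<psi> N z y' w = \<psi> w * ennreal (1 / (\<bar>c\<bar> * \<bar>w\<bar>)) * ennreal (G w z (W N y'))" for z y'
        unfolding XX_def by (simp add: ennreal_mult[symmetric] G_nonneg mult.assoc)
      have "(\<integral>\<^sup>+y'. \<integral>\<^sup>+z. XX \<psi> N z y' w \<partial>D0 \<partial>Lx N)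
          = (\<integral>\<^sup>+y'. \<psi> w * ennreal (1 / (\<bar>c\<bar> * \<bar>w\<bar>)) * (\<integral>\<^sup>+z. ennreal (G w z (W N y')) \<partial>D0) \<partial>Lx N)"
        unfolding Xe by (intro nn_integral_cong nn_integral_cmult) measurable
      also have "\<dots> = \<psi> w * ennreal (1 / (\<bar>c\<bar> * \<bar>w\<bar>)) * (\<integral>\<^sup>+y'. \<integral>\<^sup>+z. ennreal (G w z (W N y')) \<partial>D0 \<partial>Lx N)"
        by (rule nn_integral_cmult) measurable
      also have "(\<integral>\<^sup>+y'. \<integral>\<^sup>+z. ennreal (G w z (W N y')) \<partial>D0 \<partial>Lx N) = (\<integral>\<^sup>+\<omega>. ennreal (G w (x0 \<omega>) (W N (xp N \<omega>))) \<partial>M)"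
        unfolding D0_def Lx_def using indep3_nn13[OF I, of "\<lambda>p. ennreal (G w (fst p) (W N (snd p)))"] by simp
      finally show ?case using gN_ennreal[OF elim, of N] by (simp add: mult.assoc)
    qed
  qed
  finally show ?thesis .
qed

end

definition tfun :: "real \<Rightarrow> nat \<Rightarrow> real \<Rightarrow> real" where
  "tfun a n w = max 0 (min 1 (real (Suc n) * min (w - a) (min (\<bar>w\<bar> - 1 / real (Suc n)) (real (Suc n) - \<bar>w\<bar>))))"

lemma tfun_cont: "continuous_on UNIV (tfun a n)"
  unfolding tfun_def[abs_def] by (intro continuous_intros)

lemma tfun_meas[measurable]: "tfun a n \<in> borel_measurable borel"
  by (rule borel_measurable_continuous_onI[OF tfun_cont])

lemma tfun_01: "0 \<le> tfun a n w" "tfun a n w \<le> 1"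
  unfolding tfun_def by auto

lemma clamp_pos: "max 0 (min 1 (X::real)) \<noteq> 0 \<Longrightarrow> 0 < X"
  by (cases "X \<le> 0") auto

lemma clamp_mono: "X \<le> max 0 Y \<Longrightarrow> max 0 (min 1 X) \<le> max 0 (min 1 (Y::real))"
  by (cases "Y \<le> 0"; cases "X \<le> 0"; cases "1 \<le> X"; cases "1 \<le> Y") auto

lemma tfun_supp:
  assumes "tfun a n w \<noteq> 0"
  shows "1 / real (Suc n) < \<bar>w\<bar>" "\<bar>w\<bar> < real (Suc n)"
proof -
  have "0 < real (Suc n) * min (w - a) (min (\<bar>w\<bar> - 1 / real (Suc n)) (real (Suc n) - \<bar>w\<bar>))"
    using assms unfolding tfun_def by (rule clamp_pos)
  then have "0 < min (w - a) (min (\<bar>w\<bar> - 1 / real (Suc n)) (real (Suc n) - \<bar>w\<bar>))"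
    by (simp add: zero_less_mult_iff)
  then show "1 / real (Suc n) < \<bar>w\<bar>" "\<bar>w\<bar> < real (Suc n)" by auto
qed

lemma tfun_mono:
  assumes "m \<le> n"
  shows "tfun a m w \<le> tfun a n w"
proof -
  define r where "r = real (Suc m)"
  define r' where "r' = real (Suc n)"
  have rr: "0 < r" "r \<le> r'" using assms by (auto simp: r_def r'_def)
  define q where "q = min (w - a) (min (\<bar>w\<bar> - 1 / r) (r - \<bar>w\<bar>))"
  define q' where "q' = min (w - a) (min (\<bar>w\<bar> - 1 / r') (r' - \<bar>w\<bar>))"
  have "1 / r' \<le> 1 / r" using rr by (simp add: frac_le)
  then have qq: "q \<le> q'" unfolding q_def q'_def using rr by auto
  have "r * q \<le> max 0 (r' * q')"
  proof (cases "q \<le> 0")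
    case True
    then have "r * q \<le> 0" using rr by (simp add: mult_nonneg_nonpos)
    then show ?thesis by simp
  next
    case False
    then have "r * q \<le> r' * q'" using rr qq by (intro mult_mono) auto
    then show ?thesis by simp
  qed
  then have "max 0 (min 1 (r * q)) \<le> max 0 (min 1 (r' * q'))" by (rule clamp_mono)
  then show ?thesis unfolding tfun_def r_def r'_def q_def q'_def .
qed

lemma tfun_lim: "(\<lambda>n. tfun a n w) \<longlonglongrightarrow> (if a < w \<and> w \<noteq> 0 then 1 else 0)"
proof (cases "a < w \<and> w \<noteq> 0")
  case True
  define \<delta> where "\<delta> = min (w - a) (\<bar>w\<bar> / 2)"
  have d: "0 < \<delta>" using True by (simp add: \<delta>_def)
  obtain k :: nat where k: "max (2 / \<bar>w\<bar>) (max (\<bar>w\<bar> + \<delta>) (1 / \<delta>)) < real k"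
    using reals_Archimedean2 by blast
  have "eventually (\<lambda>n. tfun a n w = 1) sequentially"
    using eventually_ge_at_top[of k]
  proof eventually_elim
    case (elim n)
    define r where "r = real (Suc n)"
    have rk: "real k < r" using elim by (simp add: r_def)
    have r0: "0 < r" by (simp add: r_def)
    have "2 / \<bar>w\<bar> < r" using k rk by simp
    then have "1 / r \<le> \<bar>w\<bar> / 2" using True r0 by (simp add: field_simps)
    moreover have "\<bar>w\<bar> + \<delta> \<le> r" using k rk by simp
    ultimately have q: "\<delta> \<le> min (w - a) (min (\<bar>w\<bar> - 1 / r) (r - \<bar>w\<bar>))"
      unfolding \<delta>_def by auto
    have "1 / \<delta> < r" using k rk by simp
    then have "1 \<le> r * \<delta>" using d by (simp add: field_simps)
    also have "\<dots> \<le> r * min (w - a) (min (\<bar>w\<bar> - 1 / r) (r - \<bar>w\<bar>))"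
      using q r0 by (intro mult_left_mono) auto
    finally show ?case unfolding tfun_def r_def[symmetric] by simp
  qed
  then show ?thesis using True by (simp add: tendsto_eventually)
next
  case False
  have "tfun a n w = 0" for n
  proof -
    have "w - a \<le> 0 \<or> \<bar>w\<bar> - 1 / real (Suc n) \<le> 0" using False by auto
    then have "min (w - a) (min (\<bar>w\<bar> - 1 / real (Suc n)) (real (Suc n) - \<bar>w\<bar>)) \<le> 0"
      by (auto simp: min_le_iff_disj)
    then have "real (Suc n) * min (w - a) (min (\<bar>w\<bar> - 1 / real (Suc n)) (real (Suc n) - \<bar>w\<bar>)) \<le> 0"
      by (simp add: mult_nonneg_nonpos)
    then show ?thesis unfolding tfun_def by simp
  qed
  then show ?thesis using False by (simp del: de_Morgan_conj)
qed

context ctx10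
begin

definition "XX0 \<omega> = x0 \<omega> * exp (Y \<omega>)"

lemma XX0_meas[measurable]: "XX0 \<in> borel_measurable M"
  unfolding XX0_def[abs_def] by measurable

lemma f1_bound: "w \<noteq> 0 \<Longrightarrow> f1 w \<le> Bd / (\<bar>c\<bar> * \<bar>w\<bar>)"
proof -
  assume w: "w \<noteq> 0"
  have "(\<integral>\<omega>. G w (x0 \<omega>) (Y \<omega> - c * \<xi> 1 \<omega>) \<partial>M) \<le> (\<integral>\<omega>. Bd \<partial>M)"
    by (rule integral_mono) (auto intro!: G_int simp: G_bd)
  then have "(\<integral>\<omega>. G w (x0 \<omega>) (Y \<omega> - c * \<xi> 1 \<omega>) \<partial>M) \<le> Bd" by (simp add: prob_space)
  then show ?thesis unfolding f1_def using w c_nz by (simp add: divide_right_mono)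
qed

lemma tfun_bnd:
  assumes g0: "0 \<le> g" and gb: "w \<noteq> 0 \<Longrightarrow> g \<le> Bd / (\<bar>c\<bar> * \<bar>w\<bar>)"
  shows "tfun b n w * g \<le> indicator {- real (Suc n)..real (Suc n)} w * (Bd * real (Suc n) / \<bar>c\<bar>)"
proof (cases "tfun b n w = 0")
  case True
  then show ?thesis using Bd_nonneg by (simp add: indicator_def)
next
  case False
  note s = tfun_supp[OF False]
  have w: "w \<noteq> 0" using s by auto
  have r: "0 < real (Suc n)" by simp
  have "1 / \<bar>w\<bar> \<le> real (Suc n)" using s r w by (simp add: field_simps)
  then have "Bd / \<bar>c\<bar> * (1 / \<bar>w\<bar>) \<le> Bd / \<bar>c\<bar> * real (Suc n)"
    using Bd_nonneg by (intro mult_left_mono) auto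
  then have "g \<le> Bd * real (Suc n) / \<bar>c\<bar>" using gb[OF w] by simp
  then have "tfun b n w * g \<le> Bd * real (Suc n) / \<bar>c\<bar>"
    using tfun_01[of b n w] g0 by (meson mult_left_le_one_le order_trans)
  moreover have "indicator {- real (Suc n)..real (Suc n)} w = (1::real)" using s by (auto simp: indicator_def)
  ultimately show ?thesis by simp
qed

lemma bnd_int: "integrable lborel (\<lambda>w. indicator {- real (Suc n)..real (Suc n)} w * (C::real))"
  by (intro integrable_mult_left) (simp add: integrable_indicator_iff)

lemma stepA: "(\<integral>\<omega>. tfun b n (XX0 \<omega>) \<partial>M) = (\<integral>w. tfun b n w * f1 w \<partial>lborel)"
proof -
  define E where "E N = (\<integral>\<omega>. tfun b n (x0 \<omega> * exp (S N \<omega>)) \<partial>M)" for N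
  have E1: "E \<longlonglongrightarrow> (\<integral>\<omega>. tfun b n (XX0 \<omega>) \<partial>M)"
  proof -
    have i1: "\<And>N. integrable M (\<lambda>\<omega>. S N \<omega> - Y \<omega>)"
      by (intro Bochner_Integration.integrable_diff S_int Y_int)
    have h1: "(\<lambda>(z, k). tfun b n (z * exp k)) \<in> borel_measurable (borel \<Otimes>\<^sub>M borel)" by measurable
    have h2: "\<And>z. continuous_on UNIV (\<lambda>k. tfun b n (z * exp k))"
      by (intro continuous_on_compose2[OF tfun_cont] continuous_intros) auto
    have h3: "\<And>z k. \<bar>tfun b n (z * exp k)\<bar> \<le> 1" using tfun_01 by simp
    have "(\<lambda>N. \<integral>\<omega>. tfun b n (x0 \<omega> * exp (S N \<omega>)) \<partial>M) \<longlonglongrightarrow> (\<integral>\<omega>. tfun b n (x0 \<omega> * exp (Y \<omega>)) \<partial>M)"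
      by (rule conv_bounded_L1[where H="\<lambda>z k. tfun b n (z * exp k)" and V=S and Vl=Y,
            OF P x0_meas S_meas Y_meas i1 conv_SY h1 h2 h3])
    then show ?thesis unfolding E_def XX0_def .
  qed
  have E2: "E N = (\<integral>w. tfun b n w * gN N w \<partial>lborel)" if N: "N \<ge> 2" for N
  proof -
    have "E N = enn2real (\<integral>\<^sup>+\<omega>. ennreal (tfun b n (x0 \<omega> * exp (S N \<omega>))) \<partial>M)"
      unfolding E_def by (rule integral_eq_nn_integral) (auto simp: tfun_01)
    also have "(\<integral>\<^sup>+\<omega>. ennreal (tfun b n (x0 \<omega> * exp (S N \<omega>))) \<partial>M)
        = (\<integral>\<^sup>+w. ennreal (tfun b n w) * ennreal (gN N w) \<partial>lborel)"
      by (rule law_XN[OF N]) measurable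
    also have "\<dots> = (\<integral>\<^sup>+w. ennreal (tfun b n w * gN N w) \<partial>lborel)"
      by (intro nn_integral_cong) (simp add: ennreal_mult tfun_01 gN_nonneg)
    also have "enn2real \<dots> = (\<integral>w. tfun b n w * gN N w \<partial>lborel)"
      by (rule integral_eq_nn_integral[symmetric]) (auto simp: tfun_01 gN_nonneg)
    finally show ?thesis .
  qed
  have E3: "(\<lambda>N. \<integral>w. tfun b n w * gN (N + 2) w \<partial>lborel) \<longlonglongrightarrow> (\<integral>w. tfun b n w * f1 w \<partial>lborel)"
  proof (rule integral_dominated_convergence[where w="\<lambda>w. indicator {- real (Suc n)..real (Suc n)} w * (Bd * real (Suc n) / \<bar>c\<bar>)"])
    show "(\<lambda>w. tfun b n w * f1 w) \<in> borel_measurable lborel" by measurable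
    show "(\<lambda>w. tfun b n w * gN (N + 2) w) \<in> borel_measurable lborel" for N by measurable
    show "integrable lborel (\<lambda>w. indicator {- real (Suc n)..real (Suc n)} w * (Bd * real (Suc n) / \<bar>c\<bar>))"
      by (rule bnd_int)
    show "AE w in lborel. norm (tfun b n w * gN (N + 2) w) \<le> indicator {- real (Suc n)..real (Suc n)} w * (Bd * real (Suc n) / \<bar>c\<bar>)" for N
      by (intro AE_I2) (use tfun_bnd[OF gN_nonneg gN_bound] tfun_01 gN_nonneg in auto)
    show "AE w in lborel. (\<lambda>N. tfun b n w * gN (N + 2) w) \<longlonglongrightarrow> tfun b n w * f1 w"
    proof (intro AE_I2)
      fix w :: real
      show "(\<lambda>N. tfun b n w * gN (N + 2) w) \<longlonglongrightarrow> tfun b n w * f1 w"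
      proof (cases "w = 0")
        case True
        then have "tfun b n w = 0" using tfun_supp(1)[of b n w] by (cases "tfun b n w = 0") auto
        then show ?thesis by simp
      next
        case False
        have "(\<lambda>N. f1N M a \<nu> \<phi> t0 f0 fxi (N + 2) w t) \<longlonglongrightarrow> f1 w"
          by (rule LIMSEQ_ignore_initial_segment[OF f1N_conv[OF False]])
        then have "(\<lambda>N. gN (N + 2) w) \<longlonglongrightarrow> f1 w"
          using gN_eq[OF _ False] by simp
        then show ?thesis by (intro tendsto_mult tendsto_const)
      qed
    qed
  qed
  have "(\<lambda>N. E (N + 2)) \<longlonglongrightarrow> (\<integral>w. tfun b n w * f1 w \<partial>lborel)"
    using E3 E2 by simp
  moreover have "(\<lambda>N. E (N + 2)) \<longlonglongrightarrow> (\<integral>\<omega>. tfun b n (XX0 \<omega>) \<partial>M)"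
    by (rule LIMSEQ_ignore_initial_segment[OF E1])
  ultimately show ?thesis using LIMSEQ_unique by blast
qed

end

context ctx10
begin

lemma tf1_int: "integrable lborel (\<lambda>w. tfun b n w * f1 w)"
proof (rule Bochner_Integration.integrable_bound[OF bnd_int[of n "Bd * real (Suc n) / \<bar>c\<bar>"]])
  show "(\<lambda>w. tfun b n w * f1 w) \<in> borel_measurable lborel" by measurable
  show "AE w in lborel. norm (tfun b n w * f1 w) \<le> norm (indicator {- real (Suc n)..real (Suc n)} w * (Bd * real (Suc n) / \<bar>c\<bar>))"
    by (intro AE_I2) (use tfun_bnd[OF f1_nonneg f1_bound, of _ b n] tfun_01 f1_nonneg Bd_nonneg in \<open>auto simp: indicator_def\<close>)
qed

lemma stepB: "(\<integral>\<^sup>+\<omega>. ennreal (tfun b n (XX0 \<omega>)) \<partial>M) = (\<integral>\<^sup>+w. ennreal (tfun b n w * f1 w) \<partial>lborel)"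
proof -
  have "(\<integral>\<^sup>+\<omega>. ennreal (tfun b n (XX0 \<omega>)) \<partial>M) = ennreal (\<integral>\<omega>. tfun b n (XX0 \<omega>) \<partial>M)"
    by (rule nn_integral_eq_integral) (auto intro!: integrable_const_bound[where B=1] simp: tfun_01)
  also have "\<dots> = ennreal (\<integral>w. tfun b n w * f1 w \<partial>lborel)" by (simp add: stepA)
  also have "\<dots> = (\<integral>\<^sup>+w. ennreal (tfun b n w * f1 w) \<partial>lborel)"
    by (rule nn_integral_eq_integral[symmetric, OF tf1_int]) (auto simp: tfun_01 f1_nonneg)
  finally show ?thesis .
qed

lemma AE_x0: "AE \<omega> in M. x0 \<omega> \<noteq> 0"
proof -
  have "AE z in distr M lborel x0. z \<noteq> 0"
    unfolding law_x0 by (subst AE_density) (auto intro: AE_mp[OF AE_lborel_singleton[of 0]])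
  then show ?thesis by (subst (asm) AE_distr_iff) auto
qed

lemma stepC: "emeasure (distr M lborel XX0) {b<..} = emeasure (density lborel (\<lambda>z. ennreal (f1 z))) {b<..}"
proof -
  define u where "u w = (if b < w \<and> w \<noteq> 0 then 1 else 0 :: real)" for w
  have [measurable]: "u \<in> borel_measurable borel" unfolding u_def[abs_def] by measurable
  have L1: "(\<lambda>n. \<integral>\<^sup>+\<omega>. ennreal (tfun b n (XX0 \<omega>)) \<partial>M) \<longlonglongrightarrow> (\<integral>\<^sup>+\<omega>. ennreal (u (XX0 \<omega>)) \<partial>M)"
  proof (rule nn_integral_LIMSEQ)
    show "incseq (\<lambda>n \<omega>. ennreal (tfun b n (XX0 \<omega>)))"
      by (auto simp: incseq_def le_fun_def intro!: ennreal_leI tfun_mono)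
    show "(\<lambda>n. ennreal (tfun b n (XX0 \<omega>))) \<longlonglongrightarrow> ennreal (u (XX0 \<omega>))" for \<omega>
      unfolding u_def by (intro tendsto_ennrealI tfun_lim)
  qed measurable
  have L2: "(\<lambda>n. \<integral>\<^sup>+w. ennreal (tfun b n w * f1 w) \<partial>lborel) \<longlonglongrightarrow> (\<integral>\<^sup>+w. ennreal (u w * f1 w) \<partial>lborel)"
  proof (rule nn_integral_LIMSEQ)
    show "incseq (\<lambda>n w. ennreal (tfun b n w * f1 w))"
      by (auto simp: incseq_def le_fun_def intro!: ennreal_leI mult_right_mono tfun_mono f1_nonneg)
    show "(\<lambda>n. ennreal (tfun b n w * f1 w)) \<longlonglongrightarrow> ennreal (u w * f1 w)" for w
      unfolding u_def by (intro tendsto_ennrealI tendsto_mult tfun_lim tendsto_const)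
  qed measurable
  have eq: "(\<integral>\<^sup>+\<omega>. ennreal (u (XX0 \<omega>)) \<partial>M) = (\<integral>\<^sup>+w. ennreal (u w * f1 w) \<partial>lborel)"
    using LIMSEQ_unique[OF L1 L2[folded stepB]] .
  have "emeasure (distr M lborel XX0) {b<..} = emeasure M (XX0 -` {b<..} \<inter> space M)"
    by (rule emeasure_distr) auto
  also have "\<dots> = (\<integral>\<^sup>+\<omega>. indicator (XX0 -` {b<..} \<inter> space M) \<omega> \<partial>M)"
    by (rule nn_integral_indicator[symmetric]) measurable
  also have "\<dots> = (\<integral>\<^sup>+\<omega>. ennreal (u (XX0 \<omega>)) \<partial>M)"
  proof (rule nn_integral_cong_AE)
    show "AE \<omega> in M. indicator (XX0 -` {b<..} \<inter> space M) \<omega> = ennreal (u (XX0 \<omega>))"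
      using AE_x0 AE_space
    proof eventually_elim
      case (elim \<omega>)
      then have "XX0 \<omega> \<noteq> 0" unfolding XX0_def by simp
      then show ?case using elim unfolding u_def by (auto simp: indicator_def)
    qed
  qed
  also have "\<dots> = (\<integral>\<^sup>+w. ennreal (u w * f1 w) \<partial>lborel)" by (rule eq)
  also have "\<dots> = (\<integral>\<^sup>+w. ennreal (f1 w) * indicator {b<..} w \<partial>lborel)"
  proof (rule nn_integral_cong_AE)
    show "AE w in lborel. ennreal (u w * f1 w) = ennreal (f1 w) * indicator {b<..} w"
      using AE_lborel_singleton[of 0] by eventually_elim (auto simp: u_def indicator_def)
  qed
  also have "\<dots> = emeasure (density lborel (\<lambda>z. ennreal (f1 z))) {b<..}"
    by (rule emeasure_density[symmetric]) auto
  finally show ?thesis .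
qed

lemma distributed_XX0: "distributed M lborel XX0 (\<lambda>z. ennreal (f1 z))"
  unfolding distributed_def
proof (intro conjI)
  show "distr M lborel XX0 = density lborel (\<lambda>z. ennreal (f1 z))"
  proof (rule measure_eqI_lessThan)
    show "sets (distr M lborel XX0) = sets borel" "sets (density lborel (\<lambda>z. ennreal (f1 z))) = sets borel" by auto
    show "emeasure (distr M lborel XX0) {x<..} < \<infinity>" for x
    proof -
      interpret DX: prob_space "distr M lborel XX0" by (rule prob_space_distr) simp
      show ?thesis by (simp add: less_top[symmetric])
    qed
    show "emeasure (distr M lborel XX0) {x<..} = emeasure (density lborel (\<lambda>z. ennreal (f1 z))) {x<..}" for x
      by (rule stepC)
  qed
  show "(\<lambda>z. ennreal (f1 z)) \<in> borel_measurable lborel" by measurable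
  show "XX0 \<in> measurable M lborel" by simp
qed

end

theorem theorem10:
  fixes M :: "'a measure" and t0 T :: real
    and x0 :: "'a \<Rightarrow> real" and a :: "real \<Rightarrow> 'a \<Rightarrow> real"
    and \<nu> :: "nat \<Rightarrow> real" and \<phi> :: "nat \<Rightarrow> real \<Rightarrow> real" and \<xi> :: "nat \<Rightarrow> 'a \<Rightarrow> real"
    and f0 :: "real \<Rightarrow> real" and fxi1 :: "real \<Rightarrow> real"
    and fxi :: "nat \<Rightarrow> (nat \<Rightarrow> real) \<Rightarrow> real"
  assumes P: "prob_space M" and complete: "complete_measure M"
    and tT: "t0 < T"
    and KL: "KL_expansion M t0 T a \<nu> \<phi> \<xi>" and nu1: "\<nu> 1 > 0"
    \<comment> \<open>(H1)\<close>
    and H1: "L2_process M t0 T a"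
    \<comment> \<open>(H2): x0, xi_1 and (xi_2,...,xi_N) absolutely continuous and independent, N >= 2\<close>
    and f0_nonneg: "\<And>z. 0 \<le> f0 z"
    and f0_dens: "distributed M lborel x0 (\<lambda>z. ennreal (f0 z))"
    and fxi1_nonneg: "\<And>z. 0 \<le> fxi1 z"
    and fxi1_dens: "distributed M lborel (\<xi> 1) (\<lambda>z. ennreal (fxi1 z))"
    and H2_ac: "\<And>N. N \<ge> 2 \<Longrightarrow> \<exists>g. distributed M (PiM {2..N} (\<lambda>_. lborel))
                    (\<lambda>\<omega>. restrict (\<lambda>j. \<xi> j \<omega>) {2..N}) g"
    and H2_indep: "\<And>N. N \<ge> 2 \<Longrightarrow> prob_space.indep3 M lborel x0 lborel (\<xi> 1)
                    (PiM {2..N} (\<lambda>_. lborel)) (\<lambda>\<omega>. restrict (\<lambda>j. \<xi> j \<omega>) {2..N})"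
    \<comment> \<open>(H3)\<close>
    and H3: "continuous_on UNIV fxi1" "bounded (range fxi1)"
    \<comment> \<open>(H4)\<close>
    and H4: "\<And>t. t \<in> {t0<..T} \<Longrightarrow> (LINT s:{t0..t}|lborel. \<phi> 1 s) \<noteq> 0"
    \<comment> \<open>(H5)\<close>
    and H5: "(AE \<omega> in M. x0 \<omega> > 0) \<or> (AE \<omega> in M. x0 \<omega> < 0)"
    \<comment> \<open>f_{xi_N}: a density of xi_N = (xi_1,...,xi_N)\<close>
    and fxi_nonneg: "\<And>N y. 0 \<le> fxi N y"
    and fxi_dens: "\<And>N. N \<ge> 1 \<Longrightarrow> distributed M (PiM {1..N} (\<lambda>_. lborel)) (xi_vec \<xi> N)
                          (\<lambda>y. ennreal (fxi N y))"
    and t: "t \<in> {t0<..T}"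
  shows "\<exists>f1 :: real \<Rightarrow> real. (\<forall>z. 0 \<le> f1 z) \<and>
           distributed M lborel (\<lambda>\<omega>. x0 \<omega> * exp (LINT s:{t0..t}|lborel. a s \<omega>)) (\<lambda>z. ennreal (f1 z)) \<and>
           (\<forall>x. x \<noteq> 0 \<longrightarrow> (\<lambda>N. f1N M a \<nu> \<phi> t0 f0 fxi N x t) \<longlonglongrightarrow> f1 x)"
proof -
  have C: "ctx10 M t0 T x0 a \<nu> \<phi> \<xi> f0 fxi1 fxi t"
    unfolding ctx10_def using P tT KL nu1 H1 f0_nonneg f0_dens fxi1_nonneg fxi1_dens H2_indep H3 H4
      fxi_nonneg fxi_dens t by blast
  interpret C: ctx10 M t0 T x0 a \<nu> \<phi> \<xi> f0 fxi1 fxi t by (rule C)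
  have X: "C.XX0 = (\<lambda>\<omega>. x0 \<omega> * exp (LINT s:{t0..t}|lborel. a s \<omega>))"
    by (simp add: fun_eq_iff C.XX0_def C.Y_def C.Ig_def)
  show ?thesis
  proof (intro exI[of _ C.f1] conjI allI impI)
    show "0 \<le> C.f1 z" for z by (rule C.f1_nonneg)
    show "distributed M lborel (\<lambda>\<omega>. x0 \<omega> * exp (LINT s:{t0..t}|lborel. a s \<omega>)) (\<lambda>z. ennreal (C.f1 z))"
      using C.distributed_XX0 unfolding X .
    show "(\<lambda>N. f1N M a \<nu> \<phi> t0 f0 fxi N x t) \<longlonglongrightarrow> C.f1 x" if "x \<noteq> 0" for x
      by (rule C.f1N_conv[OF that])
  qed
qed

end
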